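(* Consider the waning-immunity model described in the context, and suppose $(\omega_n+\mu)(\mu+r)<\beta_0\omega_n+\beta_n\mu$. Then, provided $\delta\ge0$ is sufficiently small, the endemic equilibrium of the system (the unique equilibrium with $I^*\in(0,1]$) is locally asymptotically stable.
   Context: Model: Fix an integer $n\ge 1$ and parameters $\delta\ge 0$ (rate of waning immunity), $\omega\ge 0$ (vaccination rate), $r>0$ (recovery rate), $\mu>0$ (birth = death rate), coverages $p_0=0$, $p_1,\dots,p_n\in[0,1]$, and transmission rates $0\le\beta_0\le\beta_1\le\dots\le\beta_n$ with $\beta_0<\beta_n$. Write $\omega_i=p_i\omega$, $\delta_i=(1-p_i)\delta$ (so $\delta_0=\delta$). The ODE system for $(S_0,\dots,S_n,I)$ is $$S_0'=\sum_{i=1}^n\omega_iS_i-\delta S_0+rI-\beta_0IS_0-\mu S_0,$$ $$S_i'=-\omega_iS_i+\delta_{i-1}S_{i-1}-\delta_iS_i-\beta_iIS_i-\mu S_i\quad(1\le i\le n-1),$$ $$S_n'=\mu-\omega_nS_n+\delta_{n-1}S_{n-1}-\beta_nIS_n-\mu S_n,$$ $$I'=I\sum_{i=0}^n\beta_iS_i-rI-\mu I,$$ with the normalization $\sum_iS_i+I=1$. An endemic equilibrium is an equilibrium $(S_0^*,\dots,S_n^*,I^* )$ of this system satisfying the normalization with $I^*\neq0$. Stability refers to the equilibrium of the $(n+2)$-dimensional ODE system. *)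

theory Defs
  imports "HOL-Analysis.Analysis"
begin

text \<open>State: S :: nat => real (components S 0 .. S n are used)
  and I :: real. Parameters: n, delta, omega, r, mu, coverages p, transmission rates beta.
  omega_i = p i * omega, delta_i = (1 - p i) * delta.\<close>

definition Sdot :: "nat \<Rightarrow> real \<Rightarrow> real \<Rightarrow> real \<Rightarrow> real \<Rightarrow> (nat \<Rightarrow> real) \<Rightarrow> (nat \<Rightarrow> real)
    \<Rightarrow> (nat \<Rightarrow> real) \<Rightarrow> real \<Rightarrow> nat \<Rightarrow> real" where
  "Sdot n \<delta> \<omega> r \<mu> p \<beta> S I i =
     (if i = 0 then
        (\<Sum>j=1..n. (p j * \<omega>) * S j) - \<delta> * S 0 + r * I - \<beta> 0 * I * S 0 - \<mu> * S 0
      else if i < n then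
        - (p i * \<omega>) * S i + ((1 - p (i - 1)) * \<delta>) * S (i - 1) - ((1 - p i) * \<delta>) * S i
          - \<beta> i * I * S i - \<mu> * S i
      else
        \<mu> - (p n * \<omega>) * S n + ((1 - p (n - 1)) * \<delta>) * S (n - 1) - \<beta> n * I * S n - \<mu> * S n)"

definition Idot :: "nat \<Rightarrow> real \<Rightarrow> real \<Rightarrow> (nat \<Rightarrow> real) \<Rightarrow> (nat \<Rightarrow> real) \<Rightarrow> real \<Rightarrow> real" where
  "Idot n r \<mu> \<beta> S I = I * (\<Sum>i=0..n. \<beta> i * S i) - r * I - \<mu> * I"

definition ode_sol :: "nat \<Rightarrow> real \<Rightarrow> real \<Rightarrow> real \<Rightarrow> real \<Rightarrow> (nat \<Rightarrow> real) \<Rightarrow> (nat \<Rightarrow> real)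
    \<Rightarrow> real set \<Rightarrow> (real \<Rightarrow> nat \<Rightarrow> real) \<Rightarrow> (real \<Rightarrow> real) \<Rightarrow> bool" where
  "ode_sol n \<delta> \<omega> r \<mu> p \<beta> D S I \<longleftrightarrow>
     (\<forall>t\<in>D. (\<forall>i\<le>n. ((\<lambda>\<tau>. S \<tau> i) has_real_derivative Sdot n \<delta> \<omega> r \<mu> p \<beta> (S t) (I t) i) (at t within D))
       \<and> (I has_real_derivative Idot n r \<mu> \<beta> (S t) (I t)) (at t within D))"

definition is_equilibrium :: "nat \<Rightarrow> real \<Rightarrow> real \<Rightarrow> real \<Rightarrow> real \<Rightarrow> (nat \<Rightarrow> real) \<Rightarrow> (nat \<Rightarrow> real)
    \<Rightarrow> (nat \<Rightarrow> real) \<Rightarrow> real \<Rightarrow> bool" where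
  "is_equilibrium n \<delta> \<omega> r \<mu> p \<beta> S I \<longleftrightarrow>
     (\<forall>i\<le>n. Sdot n \<delta> \<omega> r \<mu> p \<beta> S I i = 0) \<and> Idot n r \<mu> \<beta> S I = 0"

definition endemic_eq :: "nat \<Rightarrow> real \<Rightarrow> real \<Rightarrow> real \<Rightarrow> real \<Rightarrow> (nat \<Rightarrow> real) \<Rightarrow> (nat \<Rightarrow> real)
    \<Rightarrow> (nat \<Rightarrow> real) \<Rightarrow> real \<Rightarrow> bool" where
  "endemic_eq n \<delta> \<omega> r \<mu> p \<beta> S I \<longleftrightarrow>
     is_equilibrium n \<delta> \<omega> r \<mu> p \<beta> S I \<and> (\<Sum>i=0..n. S i) + I = 1 \<and> 0 < I \<and> I \<le> 1"

definition loc_asymp_stable :: "nat \<Rightarrow> real \<Rightarrow> real \<Rightarrow> real \<Rightarrow> real \<Rightarrow> (nat \<Rightarrow> real) \<Rightarrow> (nat \<Rightarrow> real)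
    \<Rightarrow> (nat \<Rightarrow> real) \<Rightarrow> real \<Rightarrow> bool" where
  "loc_asymp_stable n \<delta> \<omega> r \<mu> p \<beta> Se Ie \<longleftrightarrow>
     (\<forall>\<epsilon>>0. \<exists>\<eta>>0. \<forall>T>0. \<forall>S I.
        ode_sol n \<delta> \<omega> r \<mu> p \<beta> {0..<T} S I \<and> (\<forall>i\<le>n. \<bar>S 0 i - Se i\<bar> < \<eta>) \<and> \<bar>I 0 - Ie\<bar> < \<eta>
        \<longrightarrow> (\<forall>t\<in>{0..<T}. (\<forall>i\<le>n. \<bar>S t i - Se i\<bar> < \<epsilon>) \<and> \<bar>I t - Ie\<bar> < \<epsilon>))
   \<and> (\<exists>\<eta>>0. \<forall>S I.
        ode_sol n \<delta> \<omega> r \<mu> p \<beta> {0..} S I \<and> (\<forall>i\<le>n. \<bar>S 0 i - Se i\<bar> < \<eta>) \<and> \<bar>I 0 - Ie\<bar> < \<eta>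
        \<longrightarrow> (\<forall>i\<le>n. ((\<lambda>t. S t i) \<longlongrightarrow> Se i) at_top) \<and> (I \<longlongrightarrow> Ie) at_top)"

end

theory Submission
  imports Defs
begin

lemma telesc: "(\<Sum>i\<in>{1..<Suc m}. g (i - 1) - g i) = (g 0 - g m :: real)"
  by (induction m) auto

lemma sum_split_n:
  assumes "n \<ge> (1::nat)"
  shows "(\<Sum>i=0..n. f i) = f 0 + (\<Sum>i\<in>{1..<n}. f i) + (f n :: real)"
proof -
  have "{0..n} = insert 0 (insert n {1..<n})" using assms by auto
  then show ?thesis using assms by (simp add: sum.insert)
qed

lemma sum_dot:
  assumes n1: "n \<ge> 1" and p0: "p 0 = 0"
  shows "(\<Sum>i=0..n. Sdot n \<delta> \<omega> r \<mu> p \<beta> S I i) + Idot n r \<mu> \<beta> S I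
         = \<mu> - \<mu> * ((\<Sum>i=0..n. S i) + I)"
proof -
  obtain m where m: "n = Suc m" using n1 by (cases n) auto
  let ?g = "\<lambda>i. (1 - p i) * \<delta> * S i"
  have mid: "(\<Sum>i\<in>{1..<n}. Sdot n \<delta> \<omega> r \<mu> p \<beta> S I i)
     = (\<Sum>i\<in>{1..<n}. (?g (i - 1) - ?g i) - (p i * \<omega>) * S i - \<beta> i * I * S i - \<mu> * S i)"
    by (rule sum.cong) (auto simp: Sdot_def algebra_simps)
  also have "\<dots> = (?g 0 - ?g m) - (\<Sum>i\<in>{1..<n}. (p i * \<omega>) * S i) - (\<Sum>i\<in>{1..<n}. \<beta> i * I * S i)
       - (\<Sum>i\<in>{1..<n}. \<mu> * S i)"
  proof -
    have t: "(\<Sum>i\<in>{1..<n}. ?g (i - 1)) - (\<Sum>i\<in>{1..<n}. ?g i) = ?g 0 - ?g m"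
      using telesc[of ?g m] m by (simp only: sum_subtractf)
    show ?thesis using t by (simp only: sum_subtractf)
  qed
  finally have mid': "(\<Sum>i\<in>{1..<n}. Sdot n \<delta> \<omega> r \<mu> p \<beta> S I i) = (?g 0 - ?g m) - (\<Sum>i\<in>{1..<n}. (p i * \<omega>) * S i) - (\<Sum>i\<in>{1..<n}. \<beta> i * I * S i)
       - (\<Sum>i\<in>{1..<n}. \<mu> * S i)" .
  have s1: "(\<Sum>j=1..n. (p j * \<omega>) * S j) = (\<Sum>i\<in>{1..<n}. (p i * \<omega>) * S i) + p n * \<omega> * S n"
    using n1 by (simp add: atLeastLessThanSuc_atLeastAtMost[symmetric] m)
  have s2: "(\<Sum>i=0..n. \<beta> i * S i) = \<beta> 0 * S 0 + (\<Sum>i\<in>{1..<n}. \<beta> i * S i) + \<beta> n * S n"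
    by (rule sum_split_n[OF n1])
  have s3: "(\<Sum>i=0..n. S i) = S 0 + (\<Sum>i\<in>{1..<n}. S i) + S n"
    by (rule sum_split_n[OF n1])
  have s4: "(\<Sum>i\<in>{1..<n}. \<beta> i * I * S i) = I * (\<Sum>i\<in>{1..<n}. \<beta> i * S i)"
    by (simp add: sum_distrib_left algebra_simps)
  have s5: "(\<Sum>i\<in>{1..<n}. \<mu> * S i) = \<mu> * (\<Sum>i\<in>{1..<n}. S i)"
    by (simp add: sum_distrib_left)
  have e0: "Sdot n \<delta> \<omega> r \<mu> p \<beta> S I 0 = (\<Sum>j=1..n. (p j * \<omega>) * S j) - \<delta> * S 0 + r * I - \<beta> 0 * I * S 0 - \<mu> * S 0"
    by (simp add: Sdot_def)
  have en: "Sdot n \<delta> \<omega> r \<mu> p \<beta> S I n = \<mu> - (p n * \<omega>) * S n + ((1 - p (n - 1)) * \<delta>) * S (n - 1) - \<beta> n * I * S n - \<mu> * S n"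
    using n1 by (simp add: Sdot_def)
  show ?thesis
    unfolding sum_split_n[OF n1, of "Sdot n \<delta> \<omega> r \<mu> p \<beta> S I"] mid' e0 en s1 Idot_def s2 s3 s4 s5
    using p0 m by (simp add: algebra_simps)
qed

lemma exit_lemma:
  fixes h h' :: "real \<Rightarrow> real"
  assumes der: "\<And>t. t \<in> {0..<T} \<Longrightarrow> (h has_real_derivative h' t) (at t within {0..<T})"
    and neg: "\<And>t. t \<in> {0..<T} \<Longrightarrow> h t \<le> M \<Longrightarrow> h' t \<le> 0"
    and h0: "h 0 < M"
    and t1: "t1 \<in> {0..<T}"
  shows "h t1 \<le> h 0"
proof (rule ccontr)
  assume "\<not> h t1 \<le> h 0"
  hence gt: "h 0 < h t1" by simp
  define L where "L = min (h t1) M"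
  have L: "h 0 < L" "L \<le> M" "L \<le> h t1" using gt h0 by (auto simp: L_def)
  have cont: "continuous_on {0..<T} h" using der by (rule DERIV_continuous_on)
  have sub: "{0..t1} \<subseteq> {0..<T}" using t1 by auto
  have cont1: "continuous_on {0..t1} h" using continuous_on_subset[OF cont sub] .
  define K where "K = {0..t1} \<inter> h -` {L..}"
  have "closed K" unfolding K_def by (rule continuous_closed_preimage[OF cont1]) auto
  moreover have "bounded K" unfolding K_def by (rule bounded_subset[of "{0..t1}"]) auto
  ultimately have cK: "compact K" using compact_eq_bounded_closed by blast
  have "t1 \<in> K" using t1 L by (auto simp: K_def)
  then obtain b where b: "b \<in> K" "\<And>y. y \<in> K \<Longrightarrow> b \<le> y"
    using compact_attains_inf[OF cK] by blast
  have b0: "0 \<le> b" "b \<le> t1" "L \<le> h b" using b(1) by (auto simp: K_def)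
  have below: "h s < L" if "0 \<le> s" "s < b" for s
  proof (rule ccontr)
    assume "\<not> h s < L"
    hence "s \<in> K" using that b0 by (auto simp: K_def)
    with b(2) that show False by fastforce
  qed
  have "h b \<le> h 0"
  proof (rule DERIV_nonpos_imp_decreasing_open[OF b0(1)])
    fix x assume x: "0 < x" "x < b"
    have xT: "x \<in> {0..<T}" using x b0 t1 by auto
    have "x \<in> interior {0..<T}" using x b0 t1 by auto
    hence "at x within {0..<T} = at x" by (rule at_within_interior)
    hence "(h has_real_derivative h' x) (at x)" using der[OF xT] by simp
    moreover have "h' x \<le> 0" using neg[OF xT] below[of x] x L by auto
    ultimately show "\<exists>y. (h has_real_derivative y) (at x) \<and> y \<le> 0" by blast
  next
    show "continuous_on {0..b} h" using continuous_on_subset[OF cont1] b0 by auto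
  qed
  with b0 L show False by linarith
qed

lemma young:
  fixes c x y C e :: real
  assumes "e > 0" "\<bar>c\<bar> \<le> C"
  shows "c * x * y \<le> e * x^2 + C^2 / (4*e) * y^2"
proof -
  have "0 \<le> (2*e*\<bar>x\<bar> - C*\<bar>y\<bar>)^2 / (4*e)" using assms by simp
  also have "\<dots> = e * x^2 + C^2 / (4*e) * y^2 - C*\<bar>x\<bar>*\<bar>y\<bar>"
    using assms by (simp add: power2_eq_square field_simps)
  finally have a: "C*\<bar>x\<bar>*\<bar>y\<bar> \<le> e * x^2 + C^2 / (4*e) * y^2" by simp
  have "c*x*y \<le> \<bar>c\<bar>*\<bar>x\<bar>*\<bar>y\<bar>" by (metis abs_ge_self abs_mult)
  also have "\<dots> \<le> C*\<bar>x\<bar>*\<bar>y\<bar>" using assms by (simp add: mult_right_mono)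
  finally show ?thesis using a by linarith
qed

lemma young_sum:
  fixes c y :: "nat \<Rightarrow> real" and x C e :: real
  assumes "e > 0" "\<And>i. i \<in> F \<Longrightarrow> \<bar>c i\<bar> \<le> C" "finite F" "card F \<le> m"
  shows "(\<Sum>i\<in>F. c i * x * y i) \<le> real m * e * x^2 + C^2 / (4*e) * (\<Sum>i\<in>F. (y i)^2)"
proof -
  have "(\<Sum>i\<in>F. c i * x * y i) \<le> (\<Sum>i\<in>F. e * x^2 + C^2 / (4*e) * (y i)^2)"
    by (rule sum_mono) (use young[OF assms(1) assms(2)] in auto)
  also have "\<dots> = real (card F) * e * x^2 + C^2 / (4*e) * (\<Sum>i\<in>F. (y i)^2)"
    by (simp add: sum.distrib sum_distrib_left)
  also have "\<dots> \<le> real m * e * x^2 + C^2 / (4*e) * (\<Sum>i\<in>F. (y i)^2)"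
    using assms(1,4) by (intro add_right_mono mult_right_mono) auto
  finally show ?thesis .
qed

lemma four_sq: "(a - b - c - d)^2 \<le> 4*(a^2+b^2+c^2+(d::real)^2)"
proof -
  have e: "4*(a^2+b^2+c^2+d^2) - (a - b - c - d)^2 = (a+b)^2+(a+c)^2+(a+d)^2+(b-c)^2+(b-d)^2+(c-d)^2"
    by (simp add: power2_eq_square algebra_simps)
  have "0 \<le> (a+b)^2+(a+c)^2+(a+d)^2+(b-c)^2+(b-d)^2+(c-d)^2" by simp
  then show ?thesis using e by linarith
qed

lemma young2:
  fixes c x y C :: real
  assumes "\<bar>c\<bar> \<le> C"
  shows "c * x * y \<le> C/2 * x^2 + C/2 * y^2"
proof -
  have "c*x*y \<le> \<bar>c\<bar>*\<bar>x\<bar>*\<bar>y\<bar>" by (metis abs_ge_self abs_mult)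
  also have "\<dots> \<le> C*(\<bar>x\<bar>*\<bar>y\<bar>)" using mult_right_mono[OF assms, of "\<bar>x\<bar>*\<bar>y\<bar>"] by (simp add: mult.assoc)
  also have "\<dots> \<le> C*((x^2 + y^2)/2)"
  proof (rule mult_left_mono)
    have "0 \<le> (\<bar>x\<bar> - \<bar>y\<bar>)^2" by simp
    then show "\<bar>x\<bar>*\<bar>y\<bar> \<le> (x^2 + y^2)/2" by (simp add: power2_eq_square algebra_simps)
    show "0 \<le> C" using assms by linarith
  qed
  finally show ?thesis by (simp add: algebra_simps)
qed

lemma half_sum:
  fixes C a b P :: real
  assumes "0 \<le> C" "a \<le> P" "b \<le> P"
  shows "C/2*a + C/2*b \<le> C*P"
proof -
  have "C/2*a \<le> C/2*P" "C/2*b \<le> C/2*P" using assms by (auto intro: mult_left_mono)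
  thus ?thesis by linarith
qed

lemma shift_sum: "(\<Sum>i\<in>{1..<Suc m}. g (i - 1)) = (\<Sum>j\<in>{0..<m}. (g j :: real))"
  using sum.shift_bounds_Suc_ivl[of "\<lambda>i. g (i - 1)" 0 m] by simp

lemma sq_sum_le:
  fixes y :: "nat \<Rightarrow> real"
  shows "(\<Sum>i\<in>F. y i)^2 \<le> real (card F) * (\<Sum>i\<in>F. (y i)^2)"
  using Cauchy_Schwarz_ineq_sum[of "\<lambda>_. 1" y F] by simp

locale wm =
  fixes n :: nat and \<omega> r \<mu> :: real and p \<beta> :: "nat \<Rightarrow> real"
  assumes n1: "n \<ge> 1" and om: "\<omega> \<ge> 0" and rpos: "r > 0" and mu: "\<mu> > 0"
    and p0: "p 0 = 0" and prange: "\<forall>i\<in>{1..n}. 0 \<le> p i \<and> p i \<le> 1"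
    and b0: "0 \<le> \<beta> 0" and bmono: "\<forall>i<n. \<beta> i \<le> \<beta> (Suc i)" and bn: "\<beta> 0 < \<beta> n"
    and cond: "(p n * \<omega> + \<mu>) * (\<mu> + r) < \<beta> 0 * (p n * \<omega>) + \<beta> n * \<mu>"
begin

lemma beta_mono: "i \<le> j \<Longrightarrow> j \<le> n \<Longrightarrow> \<beta> i \<le> \<beta> j"
proof (induction j)
  case 0 then show ?case by simp
next
  case (Suc j)
  show ?case
  proof (cases "i = Suc j")
    case False
    then have "\<beta> i \<le> \<beta> j" using Suc by auto
    also have "\<beta> j \<le> \<beta> (Suc j)" using bmono Suc by auto
    finally show ?thesis .
  qed simp
qed

lemma beta_range: "i \<le> n \<Longrightarrow> \<beta> 0 \<le> \<beta> i \<and> \<beta> i \<le> \<beta> n"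
  using beta_mono by auto

lemma bnpos: "\<beta> n > 0" using b0 bn by linarith

lemma p_range: "i \<le> n \<Longrightarrow> 0 \<le> p i \<and> p i \<le> 1"
  using prange p0 by (cases "i = 0") auto

definition "slow = \<mu> / (2 * (p n * \<omega> + \<mu> + \<beta> n))"
definition "\<sigma>0 = \<beta> n * slow"
definition "k0 = (\<beta> n - \<beta> 0) / (2 * \<beta> n)"
definition "k1 = (\<beta> n - \<beta> 0) / \<sigma>0"
definition "C1 = p n * \<omega> + \<mu> + 4 * \<beta> n"
definition "eps = min (min (k0/2) (1/2)) (k0*\<mu>*\<sigma>0 / (8*(C1^2 + \<beta> n * \<sigma>0)))"
definition "BB = 2 * (2*real n*(\<beta> n)^2/(eps*\<sigma>0) + 8*real n*eps^2*(\<beta> n)^2/(k0*\<mu>)) / \<mu> + 1"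
definition "AA = 2 * (2*(\<beta> 0)^2/(eps*\<sigma>0) + 8*eps^2*(\<beta> 0)^2/(k0*\<mu>)) / \<mu> + 1"
definition "c0 = min (min (k0*\<mu>/2) (eps*\<sigma>0/2)) (min (BB*\<mu>/2) (AA*\<mu>/2))"
definition "KK = k1 + eps + BB + BB * \<beta> n * real n / \<mu>"
definition "dc = c0 / (10 * real n * KK)"

lemma pn: "0 \<le> p n" "p n \<le> 1" using p_range by auto

lemma consts_pos: "slow > 0" "\<sigma>0 > 0" "k0 > 0" "k1 > 0" "C1 > 0" "eps > 0" "BB > 0" "AA > 0"
  "c0 > 0" "KK > 0" "dc > 0"
proof -
  have pw: "p n * \<omega> \<ge> 0" using pn om by simp
  show s: "slow > 0" unfolding slow_def using mu bnpos pw by simp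
  show sg: "\<sigma>0 > 0" unfolding \<sigma>0_def using s bnpos by simp
  show k: "k0 > 0" unfolding k0_def using bn bnpos by simp
  show "k1 > 0" unfolding k1_def using bn sg by simp
  show c: "C1 > 0" unfolding C1_def using pw mu bnpos by simp
  show e: "eps > 0" unfolding eps_def using k mu sg c bnpos by (simp add: add_pos_pos)
  have "0 \<le> 2 * (2*real n*(\<beta> n)^2/(eps*\<sigma>0) + 8*real n*eps^2*(\<beta> n)^2/(k0*\<mu>)) / \<mu>"
    by (intro divide_nonneg_pos mult_nonneg_nonneg add_nonneg_nonneg divide_nonneg_nonneg) (use e sg k mu in auto)
  then show B: "BB > 0" unfolding BB_def by linarith
  have "0 \<le> 2 * (2*(\<beta> 0)^2/(eps*\<sigma>0) + 8*eps^2*(\<beta> 0)^2/(k0*\<mu>)) / \<mu>"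
    by (intro divide_nonneg_pos mult_nonneg_nonneg add_nonneg_nonneg divide_nonneg_nonneg) (use e sg k mu in auto)
  then show A: "AA > 0" unfolding AA_def by linarith
  show c0: "c0 > 0" unfolding c0_def using k mu e sg A B by simp
  have "0 \<le> BB * \<beta> n * real n / \<mu>" using B bnpos mu by simp
  then show K: "KK > 0" unfolding KK_def using \<open>k1 > 0\<close> e B by linarith
  show "dc > 0" unfolding dc_def using c0 K n1 by simp
qed


lemma sum_split_n:
  shows "(\<Sum>i=0..n. f i) = f 0 + (\<Sum>i\<in>{1..<n}. f i) + (f n :: real)"
proof -
  have "{0..n} = insert 0 (insert n {1..<n})" using n1 by auto
  then show ?thesis using n1 by (simp add: sum.insert)
qed

definition SD :: "real \<Rightarrow> (nat\<Rightarrow>real) \<Rightarrow> (nat\<Rightarrow>real) \<Rightarrow> real \<Rightarrow> real \<Rightarrow> nat \<Rightarrow> real" where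
  "SD \<delta> Se u w I i = (if i < n then -(p i*\<omega> + (1 - p i)*\<delta> + \<mu>)*u i else -(p n*\<omega> + \<mu>)*u i)
      + (1 - p (i - 1))*\<delta>*u (i - 1) - \<beta> i*(I*u i + Se i*w)"
definition "Yf u = (\<Sum>i=0..n. \<beta> i * u i)"
definition "kk Se = (\<beta> n - \<beta> 0)/(\<beta> n * Se n)"
definition "Vd \<delta> Iw Se u w z I = kk Se * u n * SD \<delta> Se u w I n + w/Iw*(I*Yf u)
   + eps*(SD \<delta> Se u w I n * w + u n*(I*Yf u))
   + BB*(\<Sum>i\<in>{1..<n}. u i * SD \<delta> Se u w I i) - AA*\<mu>*z^2"
definition "Um (u::nat\<Rightarrow>real) = (\<Sum>i\<in>{1..<n}. (u i)^2)"
definition "Qf (u::nat\<Rightarrow>real) (w::real) (z::real) = (u n)^2 + w^2 + z^2 + Um u"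

lemma Y_dec:
  assumes z: "z = (\<Sum>i=0..n. u i) + w"
  shows "Yf u = \<beta> 0*z - \<beta> 0*w + (\<beta> n - \<beta> 0)*u n + (\<Sum>i\<in>{1..<n}. (\<beta> i - \<beta> 0)*u i)"
proof -
  have a: "Yf u = \<beta> 0 * u 0 + (\<Sum>i\<in>{1..<n}. \<beta> i * u i) + \<beta> n * u n"
    unfolding Yf_def by (rule sum_split_n)
  have b: "z = u 0 + (\<Sum>i\<in>{1..<n}. u i) + u n + w" using z sum_split_n[of u] by simp
  have c: "(\<Sum>i\<in>{1..<n}. (\<beta> i - \<beta> 0)*u i) = (\<Sum>i\<in>{1..<n}. \<beta> i * u i) - \<beta> 0 * (\<Sum>i\<in>{1..<n}. u i)"
    by (simp add: algebra_simps sum_subtractf sum_distrib_left)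
  show ?thesis unfolding a b c by (simp add: algebra_simps)
qed

lemma Q_nonneg: "Um u \<ge> 0" "Qf u w z \<ge> 0"
proof -
  show a: "Um u \<ge> 0" unfolding Um_def by (intro sum_nonneg) simp
  show "Qf u w z \<ge> 0" unfolding Qf_def using a by simp
qed

lemma P_bound:
  assumes z: "z = (\<Sum>i=0..n. u i) + w"
  shows "(\<Sum>i=0..n. (u i)^2) + w^2 \<le> 5 * real n * Qf u w z"
proof -
  let ?m = "\<Sum>i\<in>{1..<n}. u i"
  have b: "u 0 = z - w - u n - ?m" using z sum_split_n[of u] by simp
  have m2: "?m^2 \<le> real n * Um u"
  proof -
    have "?m^2 \<le> real (card {1..<n}) * Um u" unfolding Um_def by (rule sq_sum_le)
    also have "\<dots> \<le> real n * Um u" using Q_nonneg(1)[of u] by (intro mult_right_mono) auto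
    finally show ?thesis .
  qed
  have "(u 0)^2 \<le> 4 * (z^2 + w^2 + (u n)^2 + ?m^2)"
    unfolding b by (rule four_sq)
  moreover have "4 * (z^2 + w^2 + (u n)^2 + ?m^2) = 4 * (z^2 + w^2 + (u n)^2) + 4 * ?m^2"
    by (simp add: algebra_simps)
  moreover have "4 * ?m^2 \<le> 4 * (real n * Um u)" using m2 by simp
  ultimately have u0: "(u 0)^2 \<le> 4 * (z^2 + w^2 + (u n)^2) + 4 * (real n * Um u)" by linarith
  have P: "(\<Sum>i=0..n. (u i)^2) = (u 0)^2 + Um u + (u n)^2" unfolding Um_def by (rule sum_split_n)
  have nn: "real n \<ge> 1" using n1 by simp
  have q: "0 \<le> z^2" "0 \<le> w^2" "0 \<le> (u n)^2" "0 \<le> Um u" using Q_nonneg by auto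
  have h: "1 * Um u \<le> real n * Um u" using nn q(4) by (intro mult_right_mono) auto
  have h2: "1 * (z^2 + w^2 + (u n)^2) \<le> real n * (z^2 + w^2 + (u n)^2)" using nn q
    by (intro mult_right_mono) auto
  have "(\<Sum>i=0..n. (u i)^2) + w^2 \<le> 5 * (real n * (z^2 + w^2 + (u n)^2)) + 5 * (real n * Um u)"
    using P u0 h h2 q by (smt (verit))
  then show ?thesis unfolding Qf_def by (simp add: algebra_simps)
qed


lemma P_ge:
  fixes u :: "nat \<Rightarrow> real"
  assumes "j \<le> n"
  shows "(u j)^2 \<le> (\<Sum>i=0..n. (u i)^2)"
  using member_le_sum[of j "{0..n}" "\<lambda>i. (u i)^2"] assms by auto

lemma P_ge_mid: fixes u :: "nat \<Rightarrow> real" shows "Um u \<le> (\<Sum>i=0..n. (u i)^2)"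
  unfolding Um_def by (rule sum_mono2) auto

lemma P_ge_mid1: fixes u :: "nat \<Rightarrow> real" shows "(\<Sum>i\<in>{1..<n}. (u (i - 1))^2) \<le> (\<Sum>i=0..n. (u i)^2)"
proof -
  obtain m where m: "n = Suc m" using n1 by (cases n) auto
  have "(\<Sum>i\<in>{1..<n}. (u (i - 1))^2) = (\<Sum>j\<in>{0..<m}. (u j)^2)"
    unfolding m by (rule shift_sum)
  also have "\<dots> \<le> (\<Sum>i=0..n. (u i)^2)" by (rule sum_mono2) (auto simp: m)
  finally show ?thesis .
qed

lemma core:
  assumes z: "z = (\<Sum>i=0..n. u i) + w"
    and d: "0 \<le> \<delta>" "\<delta> \<le> dc"
    and I: "0 \<le> I" "I \<le> 2"
    and Sn: "slow \<le> Se n" "Se n \<le> 2"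
    and Smid: "\<forall>i\<in>{1..<n}. \<bar>Se i\<bar> \<le> \<delta>/\<mu>"
    and cub: "w/Iw*(I*Yf u) - w*Yf u \<le> eps*\<sigma>0/8 * w^2"
  shows "Vd \<delta> Iw Se u w z I \<le> -(c0/2) * Qf u w z"
proof -
  note cp = consts_pos
  define an where "an = p n*\<omega> + \<mu>"
  define \<sigma> where "\<sigma> = \<beta> n * Se n"
  define k where "k = kk Se"
  define \<nu> where "\<nu> = (1 - p (n-1))*\<delta>*u (n-1)"
  define M where "M = (\<Sum>i\<in>{1..<n}. (\<beta> i - \<beta> 0)*u i)"
  define Y where "Y = Yf u"
  define X where "X = (u n)^2"
  define W2 where "W2 = w^2"
  define Z2 where "Z2 = z^2"
  define U where "U = Um u"
  define P where "P = (\<Sum>i=0..n. (u i)^2)"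
  define Msum where "Msum = (\<Sum>i\<in>{1..<n}. (p i*\<omega> + (1 - p i)*\<delta> + \<mu> + \<beta> i*I)*(u i)^2)"
  define Ss1 where "Ss1 = (\<Sum>i\<in>{1..<n}. (1 - p (i-1))*\<delta>*u i*u (i-1))"
  define Ss2 where "Ss2 = (\<Sum>i\<in>{1..<n}. \<beta> i*Se i*u i*w)"
  define Cub where "Cub = w/Iw*(I*Y) - w*Y"
  have pw: "p n * \<omega> \<ge> 0" using pn om by simp
  have an_ge: "an \<ge> \<mu>" unfolding an_def using pw by simp
  have \<sigma>ge: "\<sigma> \<ge> \<sigma>0" unfolding \<sigma>_def \<sigma>0_def using Sn bnpos by simp
  have \<sigma>pos: "\<sigma> > 0" using \<sigma>ge cp by linarith
  have k\<sigma>: "k*\<sigma> = \<beta> n - \<beta> 0"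
  proof -
    have "\<beta> n * Se n \<noteq> 0" using \<sigma>pos unfolding \<sigma>_def by linarith
    then show ?thesis unfolding k_def kk_def \<sigma>_def by simp
  qed
  have kge: "k \<ge> k0"
  proof -
    have "\<beta> n * Se n \<le> 2 * \<beta> n" using Sn bnpos by simp
    hence "(\<beta> n - \<beta> 0)/(2 * \<beta> n) \<le> (\<beta> n - \<beta> 0)/(\<beta> n * Se n)"
      using bn \<sigma>pos \<sigma>_def by (intro divide_left_mono) auto
    thus ?thesis unfolding k_def kk_def k0_def .
  qed
  have kle: "k \<le> k1"
  proof -
    have "(\<beta> n - \<beta> 0)/\<sigma> \<le> (\<beta> n - \<beta> 0)/\<sigma>0"
      using bn \<sigma>ge cp by (intro divide_left_mono) auto
    thus ?thesis unfolding k_def kk_def k1_def \<sigma>_def .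
  qed
  have kpos: "k > 0" using kge cp by linarith
  have pn1: "0 \<le> p (n-1)" "p (n-1) \<le> 1" using p_range[of "n-1"] by auto
  have SDn: "SD \<delta> Se u w I n = -(an + \<beta> n*I)*u n + \<nu> - \<sigma>*w"
    unfolding SD_def an_def \<nu>_def \<sigma>_def by (simp add: algebra_simps)
  have SDsum: "(\<Sum>i\<in>{1..<n}. u i * SD \<delta> Se u w I i) = Ss1 - Ss2 - Msum"
    unfolding Ss1_def Ss2_def Msum_def sum_subtractf[symmetric]
    by (rule sum.cong) (auto simp: SD_def power2_eq_square algebra_simps)
  have Ydec: "Y = \<beta> 0*z - \<beta> 0*w + (\<beta> n - \<beta> 0)*u n + M"
    unfolding Y_def M_def using Y_dec[OF z] .
  define Main where "Main = -(k*(an + \<beta> n*I))*X + \<beta> 0*w*z - \<beta> 0*W2 + w*M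
       + eps*(-(an + \<beta> n*I + I*\<beta> 0))*w*u n - eps*\<sigma>*W2 + eps*I*(\<beta> n - \<beta> 0)*X
       + eps*I*\<beta> 0*u n*z + eps*I*u n*M - BB*Msum - AA*\<mu>*Z2"
  define Small where "Small = k*u n*\<nu> + eps*\<nu>*w + BB*Ss1 - BB*Ss2"
  have decomp0: "Vd \<delta> Iw Se u w z I = Main + Small + Cub + ((\<beta> n - \<beta> 0)*(u n*w) - (k*\<sigma>)*(u n*w))"
    unfolding Vd_def SDn SDsum Main_def Small_def Cub_def
    unfolding k_def[symmetric] Y_def[symmetric] X_def W2_def Z2_def Ydec
    by (simp add: power2_eq_square algebra_simps)
  have decomp: "Vd \<delta> Iw Se u w z I = Main + Small + Cub"
    using decomp0 k\<sigma> by simp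
  have nr: "real n \<ge> 1" using n1 by simp
  have X0: "X \<ge> 0" "W2 \<ge> 0" "Z2 \<ge> 0" "U \<ge> 0" "P \<ge> 0"
    unfolding X_def W2_def Z2_def U_def P_def using Q_nonneg(1)[of u] by (auto intro: sum_nonneg)
  define e1 where "e1 = eps*\<sigma>0/8"
  define e2 where "e2 = k0*\<mu>/8"
  have e1p: "e1 > 0" unfolding e1_def using cp by simp
  have e2p: "e2 > 0" unfolding e2_def using cp mu by simp
  define cX1 where "cX1 = (eps*C1)^2/(4*e1)"
  define cU1 where "cU1 = (\<beta> n)^2/(4*(e1/real n))"
  define cU2 where "cU2 = (2*eps*\<beta> n)^2/(4*(e2/real n))"
  define cZ1 where "cZ1 = (\<beta> 0)^2/(4*e1)"
  define cZ2 where "cZ2 = (2*eps*\<beta> 0)^2/(4*e2)"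
  have finF: "finite {1..<n}" "card {1..<n} \<le> n" by auto
  have bF: "\<bar>\<beta> i - \<beta> 0\<bar> \<le> \<beta> n" if "i \<in> {1..<n}" for i
  proof -
    have "\<beta> 0 \<le> \<beta> i \<and> \<beta> i \<le> \<beta> n" using that by (intro beta_range) auto
    then show ?thesis using b0 by linarith
  qed
  have m1: "-(k*(an + \<beta> n*I))*X \<le> -(k0*\<mu>)*X"
  proof -
    have "0 \<le> \<beta> n*I" using I bnpos by simp
    hence "\<mu> \<le> an + \<beta> n*I" using an_ge by linarith
    hence "k0*\<mu> \<le> k*(an + \<beta> n*I)" using kge cp mu by (intro mult_mono) auto
    hence "(k0*\<mu>)*X \<le> (k*(an + \<beta> n*I))*X" using X0 by (intro mult_right_mono) auto
    thus ?thesis by simp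
  qed
  have m2: "\<beta> 0*w*z \<le> e1*W2 + cZ1*Z2"
    using young[of e1 "\<beta> 0" "\<beta> 0" w z] e1p b0 unfolding cZ1_def W2_def Z2_def by simp
  have m3: "0 \<le> \<beta> 0*W2" using b0 X0 by simp
  have m4: "w*M \<le> e1*W2 + cU1*U"
  proof -
    have "w*M = (\<Sum>i\<in>{1..<n}. (\<beta> i - \<beta> 0)*w*u i)"
      unfolding M_def sum_distrib_left by (rule sum.cong) auto
    also have "\<dots> \<le> real n * (e1/real n) * w^2 + (\<beta> n)^2/(4*(e1/real n)) * (\<Sum>i\<in>{1..<n}. (u i)^2)"
      by (rule young_sum) (use e1p nr bF finF in auto)
    also have "\<dots> = e1*W2 + cU1*U" using nr unfolding cU1_def W2_def U_def Um_def by simp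
    finally show ?thesis .
  qed
  have m5: "eps*(-(an + \<beta> n*I + I*\<beta> 0))*w*u n \<le> e1*W2 + cX1*X"
  proof -
    have a: "0 \<le> an + \<beta> n*I + I*\<beta> 0" using an_ge mu I bnpos b0 by simp
    have "\<beta> n*I \<le> 2*\<beta> n" "I*\<beta> 0 \<le> 2*\<beta> n" using I bnpos b0 bn
      by (auto intro: mult_mono)
    hence "an + \<beta> n*I + I*\<beta> 0 \<le> C1" unfolding an_def C1_def by linarith
    hence "\<bar>eps*(-(an + \<beta> n*I + I*\<beta> 0))\<bar> \<le> eps*C1" using a cp by (simp add: abs_mult)
    from young[OF e1p this, of w "u n"] show ?thesis unfolding cX1_def W2_def X_def by simp
  qed
  have m6: "eps*\<sigma>0*W2 \<le> eps*\<sigma>*W2" using \<sigma>ge cp X0 by (intro mult_right_mono mult_left_mono) auto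
  have m7: "eps*I*(\<beta> n - \<beta> 0)*X \<le> (2*eps*\<beta> n)*X"
  proof -
    have "I*(\<beta> n - \<beta> 0) \<le> 2*(\<beta> n - \<beta> 0)" using I bn by (intro mult_right_mono) auto
    moreover have "2*(\<beta> n - \<beta> 0) \<le> 2*\<beta> n" using b0 by simp
    ultimately have "I*(\<beta> n - \<beta> 0) \<le> 2*\<beta> n" by (rule order_trans)
    hence "eps*(I*(\<beta> n - \<beta> 0)) \<le> eps*(2*\<beta> n)" using cp by (intro mult_left_mono) auto
    from mult_right_mono[OF this X0(1)]
    have "(eps*(I*(\<beta> n - \<beta> 0)))*X \<le> (eps*(2*\<beta> n))*X" .
    moreover have "eps*I*(\<beta> n - \<beta> 0)*X = (eps*(I*(\<beta> n - \<beta> 0)))*X" by (simp add: mult.assoc)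
    moreover have "(2*eps*\<beta> n)*X = (eps*(2*\<beta> n))*X" by simp
    ultimately show ?thesis by simp
  qed
  have m8: "eps*I*\<beta> 0*u n*z \<le> e2*X + cZ2*Z2"
  proof -
    have "I*\<beta> 0 \<le> 2*\<beta> 0" using I b0 by (simp add: mult_right_mono)
    hence "\<bar>eps*I*\<beta> 0\<bar> \<le> 2*eps*\<beta> 0" using cp I b0 by (simp add: abs_mult mult.assoc)
    from young[OF e2p this, of "u n" z] show ?thesis unfolding cZ2_def X_def Z2_def by simp
  qed
  have m9: "eps*I*u n*M \<le> e2*X + cU2*U"
  proof -
    have "eps*I*u n*M = (\<Sum>i\<in>{1..<n}. (eps*I*(\<beta> i - \<beta> 0))*u n*u i)"
      unfolding M_def sum_distrib_left by (rule sum.cong) auto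
    also have "\<dots> \<le> real n * (e2/real n) * (u n)^2 + (2*eps*\<beta> n)^2/(4*(e2/real n)) * (\<Sum>i\<in>{1..<n}. (u i)^2)"
    proof (rule young_sum)
      fix i assume "i \<in> {1..<n}"
      hence "\<bar>\<beta> i - \<beta> 0\<bar> \<le> \<beta> n" by (rule bF)
      hence "I*\<bar>\<beta> i - \<beta> 0\<bar> \<le> 2*\<beta> n" using I bnpos mult_mono[of I 2 "\<bar>\<beta> i - \<beta> 0\<bar>" "\<beta> n"] by auto
      then show "\<bar>eps*I*(\<beta> i - \<beta> 0)\<bar> \<le> 2*eps*\<beta> n" using cp I
        by (simp add: abs_mult mult.assoc)
    qed (use e2p nr finF in auto)
    also have "\<dots> = e2*X + cU2*U" using nr unfolding cU2_def X_def U_def Um_def by simp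
    finally show ?thesis .
  qed
  have m10: "BB*\<mu>*U \<le> BB*Msum"
  proof -
    have "\<mu>*U \<le> Msum" unfolding U_def Um_def Msum_def sum_distrib_left
    proof (rule sum_mono)
      fix i assume i: "i \<in> {1..<n}"
      have "0 \<le> p i" "p i \<le> 1" using p_range[of i] i by auto
      have "0 \<le> p i*\<omega>" using \<open>0 \<le> p i\<close> om by simp
      moreover have "0 \<le> (1 - p i)*\<delta>" using \<open>p i \<le> 1\<close> d by simp
      moreover have "0 \<le> \<beta> i" using beta_range[of i] b0 i by auto
      hence "0 \<le> \<beta> i*I" using I by simp
      ultimately have "\<mu> \<le> p i*\<omega> + (1 - p i)*\<delta> + \<mu> + \<beta> i*I" by linarith
      then show "\<mu> * (u i)^2 \<le> (p i*\<omega> + (1 - p i)*\<delta> + \<mu> + \<beta> i*I)*(u i)^2"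
        by (intro mult_right_mono) auto
    qed
    thus ?thesis using cp by (simp add: mult.assoc mult_left_mono)
  qed
  have mc: "Cub \<le> e1*W2" using cub unfolding Cub_def Y_def e1_def W2_def by simp
  have epsle: "eps \<le> k0*\<mu>*\<sigma>0 / (8*(C1^2 + \<beta> n*\<sigma>0))" unfolding eps_def by simp
  have cXb: "cX1 + 2*eps*\<beta> n \<le> k0*\<mu>/4"
  proof -
    have pos: "8*(C1^2 + \<beta> n*\<sigma>0) > 0" using cp bnpos by (simp add: add_pos_pos)
    have "eps * (8*(C1^2 + \<beta> n*\<sigma>0)) \<le> k0*\<mu>*\<sigma>0" using epsle pos by (simp add: le_divide_eq)
    moreover have "cX1 + 2*eps*\<beta> n = eps * (8*(C1^2 + \<beta> n*\<sigma>0)) / (4*\<sigma>0)"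
      unfolding cX1_def e1_def using cp by (simp add: field_simps power2_eq_square)
    ultimately show ?thesis using cp by (simp add: divide_le_eq)
  qed
  have cUb: "cU1 + cU2 \<le> BB*\<mu>/2"
  proof -
    have "cU1 = 2*real n*(\<beta> n)^2/(eps*\<sigma>0)" unfolding cU1_def e1_def using cp nr
      by (simp add: field_simps)
    moreover have "cU2 = 8*real n*eps^2*(\<beta> n)^2/(k0*\<mu>)" unfolding cU2_def e2_def using cp nr mu
      by (simp add: field_simps power2_eq_square)
    moreover have "BB*\<mu>/2 = (2*real n*(\<beta> n)^2/(eps*\<sigma>0) + 8*real n*eps^2*(\<beta> n)^2/(k0*\<mu>)) + \<mu>/2"
      unfolding BB_def using mu by (simp add: field_simps)
    ultimately show ?thesis using mu by simp
  qed
  have cZb: "cZ1 + cZ2 \<le> AA*\<mu>/2"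
  proof -
    have "cZ1 = 2*(\<beta> 0)^2/(eps*\<sigma>0)" unfolding cZ1_def e1_def using cp
      by (simp add: field_simps)
    moreover have "cZ2 = 8*eps^2*(\<beta> 0)^2/(k0*\<mu>)" unfolding cZ2_def e2_def using cp mu
      by (simp add: field_simps power2_eq_square)
    moreover have "AA*\<mu>/2 = (2*(\<beta> 0)^2/(eps*\<sigma>0) + 8*eps^2*(\<beta> 0)^2/(k0*\<mu>)) + \<mu>/2"
      unfolding AA_def using mu by (simp add: field_simps)
    ultimately show ?thesis using mu by simp
  qed
  have fX: "-(k0*\<mu>)*X + cX1*X + (2*eps*\<beta> n)*X + e2*X + e2*X \<le> (-(k0*\<mu>/2))*X"
  proof -
    have "(-(k0*\<mu>) + cX1 + 2*eps*\<beta> n + e2 + e2) \<le> -(k0*\<mu>/2)" using cXb unfolding e2_def by linarith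
    from mult_right_mono[OF this X0(1)] show ?thesis by (simp add: algebra_simps)
  qed
  have fW: "e1*W2 + e1*W2 + e1*W2 + e1*W2 - eps*\<sigma>0*W2 \<le> (-(eps*\<sigma>0/2))*W2"
    unfolding e1_def by (simp add: algebra_simps)
  have fU: "cU1*U + cU2*U - BB*\<mu>*U \<le> (-(BB*\<mu>/2))*U"
  proof -
    have "cU1 + cU2 - BB*\<mu> \<le> -(BB*\<mu>/2)" using cUb by simp
    from mult_right_mono[OF this X0(4)] show ?thesis by (simp add: algebra_simps)
  qed
  have fZ: "cZ1*Z2 + cZ2*Z2 - AA*\<mu>*Z2 \<le> (-(AA*\<mu>/2))*Z2"
  proof -
    have "cZ1 + cZ2 - AA*\<mu> \<le> -(AA*\<mu>/2)" using cZb by simp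
    from mult_right_mono[OF this X0(3)] show ?thesis by (simp add: algebra_simps)
  qed
  have mainb: "Main + Cub \<le> (-(k0*\<mu>/2))*X + (-(eps*\<sigma>0/2))*W2 + (-(BB*\<mu>/2))*U + (-(AA*\<mu>/2))*Z2"
    unfolding Main_def using m1 m2 m3 m4 m5 m6 m7 m8 m9 m10 mc fX fW fU fZ by linarith
  have c0le: "c0 \<le> k0*\<mu>/2" "c0 \<le> eps*\<sigma>0/2" "c0 \<le> BB*\<mu>/2" "c0 \<le> AA*\<mu>/2"
    unfolding c0_def by auto
  have mainb2: "Main + Cub \<le> -c0 * Qf u w z"
  proof -
    have "(-(k0*\<mu>/2))*X \<le> -c0*X" using c0le X0 by (intro mult_right_mono) auto
    moreover have "(-(eps*\<sigma>0/2))*W2 \<le> -c0*W2" using c0le X0 by (intro mult_right_mono) auto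
    moreover have "(-(BB*\<mu>/2))*U \<le> -c0*U" using c0le X0 by (intro mult_right_mono) auto
    moreover have "(-(AA*\<mu>/2))*Z2 \<le> -c0*Z2" using c0le X0 by (intro mult_right_mono) auto
    moreover have "-c0 * Qf u w z = -c0*X + -c0*W2 + -c0*U + -c0*Z2"
      unfolding Qf_def X_def W2_def U_def Z2_def by (simp add: algebra_simps)
    ultimately show ?thesis using mainb by linarith
  qed
  have Pge: "X \<le> P" "(u (n-1))^2 \<le> P" "U \<le> P" "(\<Sum>i\<in>{1..<n}. (u (i - 1))^2) \<le> P" "W2 \<ge> 0"
    unfolding X_def P_def U_def W2_def using P_ge[of n u] P_ge[of "n-1" u] P_ge_mid[of u] P_ge_mid1[of u]
    by auto
  have dP: "0 \<le> \<delta>*P" "0 \<le> \<delta>*W2" using d X0 by auto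
  have s1: "k*u n*\<nu> \<le> k1*(\<delta>*P)"
  proof -
    have e: "k*u n*\<nu> = (k*(1 - p (n-1))*\<delta>)*u n*u (n-1)" unfolding \<nu>_def by (simp add: algebra_simps)
    have "0 \<le> k*(1 - p (n-1))*\<delta>" using kpos pn1 d by simp
    moreover have "k*(1 - p (n-1))*\<delta> \<le> k1*\<delta>"
    proof -
      have "k*(1 - p (n-1)) \<le> k1*1" using kle kpos pn1 by (intro mult_mono) auto
      thus ?thesis using d by (simp add: mult_right_mono)
    qed
    ultimately have "\<bar>k*(1 - p (n-1))*\<delta>\<bar> \<le> k1*\<delta>" by simp
    from young2[OF this, of "u n" "u (n-1)"]
    have "k*u n*\<nu> \<le> k1*\<delta>/2*X + k1*\<delta>/2*(u (n-1))^2" unfolding X_def e .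
    also have "\<dots> \<le> k1*\<delta>*P" using half_sum[of "k1*\<delta>" X P "(u (n-1))^2"] Pge cp d by simp
    finally show ?thesis by (simp add: mult.assoc)
  qed
  have s2: "eps*\<nu>*w \<le> eps*(\<delta>*P) + eps*(\<delta>*W2)"
  proof -
    have e: "eps*\<nu>*w = (eps*(1 - p (n-1))*\<delta>)*u (n-1)*w" unfolding \<nu>_def by (simp add: algebra_simps)
    have "0 \<le> eps*(1 - p (n-1))*\<delta>" using cp pn1 d by simp
    moreover have "eps*(1 - p (n-1))*\<delta> \<le> eps*\<delta>"
      using cp pn1 d by (simp add: mult_left_le mult_right_mono)
    ultimately have "\<bar>eps*(1 - p (n-1))*\<delta>\<bar> \<le> eps*\<delta>" by simp
    from young2[OF this, of "u (n-1)" w]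
    have "eps*\<nu>*w \<le> eps*\<delta>/2*(u (n-1))^2 + eps*\<delta>/2*W2" unfolding W2_def e .
    moreover have "eps*\<delta>/2*(u (n-1))^2 \<le> eps*\<delta>*P"
    proof -
      have a: "eps*\<delta>/2*(u (n-1))^2 \<le> eps*\<delta>/2*P" using Pge cp d by (intro mult_left_mono) auto
      have b: "eps*\<delta>/2*P = (eps*\<delta>*P)/2" by simp
      have "0 \<le> eps*\<delta>*P" using cp dP by (simp add: mult.assoc)
      then show ?thesis using a b by linarith
    qed
    moreover have "eps*\<delta>/2*W2 \<le> eps*\<delta>*W2" using Pge cp d by (simp add: mult_nonneg_nonneg)
    ultimately have "eps*\<nu>*w \<le> eps*\<delta>*P + eps*\<delta>*W2" by linarith
    thus ?thesis by (simp add: mult.assoc)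
  qed
  have s3: "BB*Ss1 \<le> BB*(\<delta>*P)"
  proof -
    have "Ss1 \<le> (\<Sum>i\<in>{1..<n}. \<delta>/2*(u i)^2 + \<delta>/2*(u (i-1))^2)"
      unfolding Ss1_def
    proof (rule sum_mono)
      fix i assume i: "i \<in> {1..<n}"
      have "0 \<le> p (i-1)" "p (i-1) \<le> 1" using p_range[of "i-1"] i by auto
      have h1: "(1 - p (i-1))*\<delta> \<le> 1*\<delta>" by (rule mult_right_mono) (use \<open>0 \<le> p (i-1)\<close> d in auto)
      have h0: "0 \<le> (1 - p (i-1))*\<delta>" using \<open>p (i-1) \<le> 1\<close> d by simp
      from h0 h1 have "\<bar>(1 - p (i-1))*\<delta>\<bar> \<le> \<delta>" by simp
      from young2[OF this] show "(1 - p (i-1))*\<delta>*u i*u (i-1) \<le> \<delta>/2*(u i)^2 + \<delta>/2*(u (i-1))^2" .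
    qed
    also have "\<dots> = \<delta>/2*U + \<delta>/2*(\<Sum>i\<in>{1..<n}. (u (i-1))^2)"
      unfolding U_def Um_def by (simp add: sum.distrib sum_distrib_left)
    also have "\<dots> \<le> \<delta>*P" using half_sum[of \<delta> U P] Pge d by simp
    finally show ?thesis using cp by (simp add: mult_left_mono)
  qed
  have s4: "-(BB*Ss2) \<le> BB*(\<beta> n*real n/\<mu>)*(\<delta>*P) + BB*(\<beta> n*real n/\<mu>)*(\<delta>*W2)"
  proof -
    define Cm where "Cm = \<beta> n*\<delta>/\<mu>"
    have Cm0: "Cm \<ge> 0" unfolding Cm_def using bnpos d mu by simp
    have "-Ss2 = (\<Sum>i\<in>{1..<n}. (-(\<beta> i*Se i))*u i*w)"
      unfolding Ss2_def sum_negf[symmetric] by simp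
    also have "\<dots> \<le> (\<Sum>i\<in>{1..<n}. Cm/2*(u i)^2 + Cm/2*w^2)"
    proof (rule sum_mono)
      fix i assume i: "i \<in> {1..<n}"
      have "\<beta> 0 \<le> \<beta> i \<and> \<beta> i \<le> \<beta> n" using i by (intro beta_range) auto
      hence "\<bar>\<beta> i\<bar> \<le> \<beta> n" using b0 by auto
      moreover have "\<bar>Se i\<bar> \<le> \<delta>/\<mu>" using Smid i by auto
      ultimately have "\<bar>\<beta> i\<bar>*\<bar>Se i\<bar> \<le> \<beta> n*(\<delta>/\<mu>)" by (intro mult_mono) auto
      hence "\<bar>-(\<beta> i*Se i)\<bar> \<le> Cm" unfolding Cm_def by (simp add: abs_mult)
      from young2[OF this] show "(-(\<beta> i*Se i))*u i*w \<le> Cm/2*(u i)^2 + Cm/2*w^2" .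
    qed
    also have "\<dots> = Cm/2*U + Cm/2*(real (card {1..<n})*W2)"
      unfolding U_def Um_def W2_def by (simp add: sum.distrib sum_distrib_left)
    also have "\<dots> \<le> (Cm*real n)*P + (Cm*real n)*W2"
    proof -
      have "Cm/2*U \<le> (Cm*real n)*P"
      proof -
        have "U \<le> real n * P" using Pge X0 nr by (smt (verit) mult_le_cancel_right1)
        hence "Cm/2*U \<le> Cm/2*(real n*P)" using Cm0 by (intro mult_left_mono) auto
        also have "\<dots> \<le> (Cm*real n)*P" using Cm0 X0 nr by (simp add: mult_nonneg_nonneg)
        finally show ?thesis .
      qed
      moreover have "Cm/2*(real (card {1..<n})*W2) \<le> (Cm*real n)*W2"
      proof -
        have "real (card {1..<n})*W2 \<le> real n*W2" using X0 by (intro mult_right_mono) auto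
        hence "Cm/2*(real (card {1..<n})*W2) \<le> Cm/2*(real n*W2)" using Cm0 by (intro mult_left_mono) auto
        also have "\<dots> \<le> (Cm*real n)*W2" using Cm0 X0 nr by (simp add: mult_nonneg_nonneg)
        finally show ?thesis .
      qed
      ultimately show ?thesis by linarith
    qed
    finally have "-Ss2 \<le> (Cm*real n)*P + (Cm*real n)*W2" .
    hence "BB*(-Ss2) \<le> BB*((Cm*real n)*P + (Cm*real n)*W2)" using cp by (intro mult_left_mono) auto
    thus ?thesis unfolding Cm_def by (simp add: algebra_simps)
  qed
  have KKe: "k1*(\<delta>*P) + eps*(\<delta>*P) + BB*(\<delta>*P) + BB*(\<beta> n*real n/\<mu>)*(\<delta>*P) = KK*(\<delta>*P)"
    unfolding KK_def by (simp add: algebra_simps)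
  have KKw: "eps*(\<delta>*W2) + BB*(\<beta> n*real n/\<mu>)*(\<delta>*W2) \<le> KK*(\<delta>*W2)"
  proof -
    have "eps*(\<delta>*W2) + BB*(\<beta> n*real n/\<mu>)*(\<delta>*W2) + (k1*(\<delta>*W2) + BB*(\<delta>*W2)) = KK*(\<delta>*W2)"
      unfolding KK_def by (simp add: algebra_simps)
    moreover have "0 \<le> k1*(\<delta>*W2) + BB*(\<delta>*W2)" using cp dP by simp
    ultimately show ?thesis by linarith
  qed
  have smallb: "Small \<le> KK*(\<delta>*P) + KK*(\<delta>*W2)"
    unfolding Small_def using s1 s2 s3 s4 KKe KKw by linarith
  have smallb2: "Small \<le> (c0/2) * Qf u w z"
  proof -
    have PB: "P + W2 \<le> 5 * real n * Qf u w z" unfolding P_def W2_def by (rule P_bound[OF z])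
    have "KK*(\<delta>*P) + KK*(\<delta>*W2) = (\<delta>*KK)*(P + W2)" by (simp add: algebra_simps)
    also have "\<dots> \<le> (\<delta>*KK)*(5 * real n * Qf u w z)" using PB d cp by (intro mult_left_mono) auto
    also have "\<dots> = (\<delta>*(10*real n*KK))/2 * Qf u w z" by (simp add: algebra_simps)
    also have "\<dots> \<le> c0/2 * Qf u w z"
    proof -
      have "\<delta>*(10*real n*KK) \<le> c0" using d cp nr unfolding dc_def by (simp add: le_divide_eq)
      thus ?thesis using Q_nonneg(2)[of u w z] by (intro mult_right_mono) auto
    qed
    finally show ?thesis using smallb by linarith
  qed
  show ?thesis using decomp mainb2 smallb2 by (simp add: algebra_simps)
qed

end

context wm begin

lemma Se_facts:
  assumes eq: "endemic_eq n \<delta> \<omega> r \<mu> p \<beta> Se Ie"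
  shows "\<forall>i\<le>n. Sdot n \<delta> \<omega> r \<mu> p \<beta> Se Ie i = 0" "(\<Sum>i=0..n. \<beta> i * Se i) = r + \<mu>"
    "(\<Sum>i=0..n. Se i) + Ie = 1" "0 < Ie" "Ie \<le> 1"
proof -
  show "\<forall>i\<le>n. Sdot n \<delta> \<omega> r \<mu> p \<beta> Se Ie i = 0" using eq unfolding endemic_eq_def is_equilibrium_def by auto
  show "(\<Sum>i=0..n. Se i) + Ie = 1" "0 < Ie" "Ie \<le> 1" using eq unfolding endemic_eq_def by auto
  have "Idot n r \<mu> \<beta> Se Ie = 0" using eq unfolding endemic_eq_def is_equilibrium_def by auto
  hence "Ie * ((\<Sum>i=0..n. \<beta> i * Se i) - r - \<mu>) = 0" unfolding Idot_def by (simp add: algebra_simps)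
  with \<open>0 < Ie\<close> show "(\<Sum>i=0..n. \<beta> i * Se i) = r + \<mu>" by simp
qed

lemma dev_SD:
  assumes eq: "endemic_eq n \<delta> \<omega> r \<mu> p \<beta> Se Ie" and i: "1 \<le> i" "i \<le> n"
  shows "Sdot n \<delta> \<omega> r \<mu> p \<beta> S I i = SD \<delta> Se (\<lambda>j. S j - Se j) (I - Ie) I i"
proof -
  have z: "Sdot n \<delta> \<omega> r \<mu> p \<beta> Se Ie i = 0" using Se_facts(1)[OF eq] i by auto
  have "Sdot n \<delta> \<omega> r \<mu> p \<beta> S I i = Sdot n \<delta> \<omega> r \<mu> p \<beta> S I i - Sdot n \<delta> \<omega> r \<mu> p \<beta> Se Ie i"
    using z by simp
  also have "\<dots> = SD \<delta> Se (\<lambda>j. S j - Se j) (I - Ie) I i"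
  proof (cases "i < n")
    case True
    then show ?thesis using i unfolding Sdot_def SD_def by (simp add: algebra_simps)
  next
    case False
    then have "i = n" using i by simp
    then show ?thesis using i unfolding Sdot_def SD_def by (simp add: algebra_simps)
  qed
  finally show ?thesis .
qed

lemma dev_I:
  assumes eq: "endemic_eq n \<delta> \<omega> r \<mu> p \<beta> Se Ie"
  shows "Idot n r \<mu> \<beta> S I = I * Yf (\<lambda>j. S j - Se j)"
proof -
  have "Yf (\<lambda>j. S j - Se j) = (\<Sum>i=0..n. \<beta> i * S i) - (\<Sum>i=0..n. \<beta> i * Se i)"
    unfolding Yf_def by (simp add: algebra_simps sum_subtractf)
  hence y: "Yf (\<lambda>j. S j - Se j) = (\<Sum>i=0..n. \<beta> i * S i) - (r + \<mu>)" using Se_facts(2)[OF eq] by simp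
  show ?thesis unfolding Idot_def y by (simp add: algebra_simps)
qed

lemma dev_sum:
  assumes eq: "endemic_eq n \<delta> \<omega> r \<mu> p \<beta> Se Ie"
  shows "(\<Sum>i=0..n. Sdot n \<delta> \<omega> r \<mu> p \<beta> S I i) + Idot n r \<mu> \<beta> S I
     = -\<mu> * ((\<Sum>j=0..n. S j - Se j) + (I - Ie))"
proof -
  have a: "(\<Sum>j=0..n. S j - Se j) = (\<Sum>j=0..n. S j) - (\<Sum>j=0..n. Se j)" by (simp add: sum_subtractf)
  have b: "(\<Sum>i=0..n. Sdot n \<delta> \<omega> r \<mu> p \<beta> S I i) + Idot n r \<mu> \<beta> S I = \<mu> - \<mu> * ((\<Sum>i=0..n. S i) + I)"
    using sum_dot[where n=n and p=p] n1 p0 by blast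
  have h: "(\<Sum>i=0..n. S i) + I = ((\<Sum>j=0..n. S j - Se j) + (I - Ie)) + 1"
    using a Se_facts(3)[OF eq] by linarith
  show ?thesis unfolding b h by (simp add: algebra_simps)
qed

definition "Vf Iw Se (u::nat\<Rightarrow>real) (w::real) (z::real) =
   kk Se/2*(u n)^2 + w^2/(2*Iw) + eps*(u n*w) + BB/2*Um u + AA/2*z^2"

lemma V_deriv:
  assumes eq: "endemic_eq n \<delta> \<omega> r \<mu> p \<beta> Se Ie"
    and sol: "ode_sol n \<delta> \<omega> r \<mu> p \<beta> D S I" and t: "t \<in> D"
  shows "((\<lambda>\<tau>. Vf Iw Se (\<lambda>j. S \<tau> j - Se j) (I \<tau> - Ie) ((\<Sum>j=0..n. S \<tau> j - Se j) + (I \<tau> - Ie)))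
     has_real_derivative Vd \<delta> Iw Se (\<lambda>j. S t j - Se j) (I t - Ie) ((\<Sum>j=0..n. S t j - Se j) + (I t - Ie)) (I t))
     (at t within D)"
proof -
  define Sd where "Sd = Sdot n \<delta> \<omega> r \<mu> p \<beta> (S t) (I t)"
  define Id where "Id = Idot n r \<mu> \<beta> (S t) (I t)"
  define u where "u = (\<lambda>j. S t j - Se j)"
  define w where "w = I t - Ie"
  define z where "z = (\<Sum>j=0..n. S t j - Se j) + (I t - Ie)"
  have dS: "((\<lambda>\<tau>. S \<tau> i) has_real_derivative Sd i) (at t within D)" if "i \<le> n" for i
    using sol t that unfolding ode_sol_def Sd_def by auto
  have dI: "(I has_real_derivative Id) (at t within D)" using sol t unfolding ode_sol_def Id_def by auto
  have dU: "((\<lambda>\<tau>. S \<tau> i - Se i) has_real_derivative Sd i) (at t within D)" if "i \<le> n" for i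
    using DERIV_diff[OF dS[OF that] DERIV_const] by simp
  have dW: "((\<lambda>\<tau>. I \<tau> - Ie) has_real_derivative Id) (at t within D)"
    using DERIV_diff[OF dI DERIV_const] by simp
  have dZ: "((\<lambda>\<tau>. (\<Sum>j=0..n. S \<tau> j - Se j) + (I \<tau> - Ie)) has_real_derivative (\<Sum>j=0..n. Sd j) + Id) (at t within D)"
    by (intro DERIV_add DERIV_sum dW dU) auto
  have sq: "((\<lambda>\<tau>. (f \<tau>)^2) has_real_derivative 2 * (f' * f t)) (at t within D)" if "(f has_real_derivative f') (at t within D)" for f f'
    using DERIV_power[OF that, of 2] by simp
  have d1: "((\<lambda>\<tau>. kk Se/2*(S \<tau> n - Se n)^2) has_real_derivative kk Se/2*(2*(Sd n * u n))) (at t within D)"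
    using DERIV_cmult[OF sq[OF dU[OF order_refl]], of "kk Se/2"] unfolding u_def .
  have d2: "((\<lambda>\<tau>. (I \<tau> - Ie)^2/(2*Iw)) has_real_derivative (2*(Id*w))/(2*Iw)) (at t within D)"
    using DERIV_cdivide[OF sq[OF dW], of "2*Iw"] unfolding w_def .
  have d3: "((\<lambda>\<tau>. eps*((S \<tau> n - Se n)*(I \<tau> - Ie))) has_real_derivative eps*(Sd n * w + Id * u n)) (at t within D)"
    using DERIV_cmult[OF DERIV_mult[OF dU[OF order_refl] dW], of eps] unfolding u_def w_def .
  have d4: "((\<lambda>\<tau>. BB/2*(\<Sum>i\<in>{1..<n}. (S \<tau> i - Se i)^2)) has_real_derivative BB/2*(\<Sum>i\<in>{1..<n}. 2*(Sd i * u i))) (at t within D)"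
    unfolding u_def
    by (intro DERIV_cmult DERIV_sum sq dU) auto
  have d5: "((\<lambda>\<tau>. AA/2*((\<Sum>j=0..n. S \<tau> j - Se j) + (I \<tau> - Ie))^2) has_real_derivative AA/2*(2*(((\<Sum>j=0..n. Sd j) + Id) * z))) (at t within D)"
    using DERIV_cmult[OF sq[OF dZ], of "AA/2"] unfolding z_def .
  have all: "((\<lambda>\<tau>. Vf Iw Se (\<lambda>j. S \<tau> j - Se j) (I \<tau> - Ie) ((\<Sum>j=0..n. S \<tau> j - Se j) + (I \<tau> - Ie)))
     has_real_derivative kk Se/2*(2*(Sd n * u n)) + (2*(Id*w))/(2*Iw) + eps*(Sd n * w + Id * u n)
        + BB/2*(\<Sum>i\<in>{1..<n}. 2*(Sd i * u i)) + AA/2*(2*(((\<Sum>j=0..n. Sd j) + Id) * z))) (at t within D)"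
    unfolding Vf_def Um_def
    by (intro DERIV_add d1 d2 d3 d4 d5)
  have SDe: "Sd i = SD \<delta> Se u w (I t) i" if "1 \<le> i" "i \<le> n" for i
    unfolding Sd_def u_def w_def using dev_SD[OF eq that] .
  have Ide: "Id = I t * Yf u" unfolding Id_def u_def using dev_I[OF eq] .
  have Ze: "(\<Sum>j=0..n. Sd j) + Id = -\<mu> * z" unfolding Sd_def Id_def z_def using dev_sum[OF eq] .
  have mid: "BB/2*(\<Sum>i\<in>{1..<n}. 2*(Sd i * u i)) = BB*(\<Sum>i\<in>{1..<n}. u i * SD \<delta> Se u w (I t) i)"
  proof -
    have "(\<Sum>i\<in>{1..<n}. 2*(Sd i * u i)) = 2*(\<Sum>i\<in>{1..<n}. u i * SD \<delta> Se u w (I t) i)"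
      unfolding sum_distrib_left by (rule sum.cong) (auto simp: SDe)
    then show ?thesis by simp
  qed
  have eqv: "kk Se/2*(2*(Sd n * u n)) + (2*(Id*w))/(2*Iw) + eps*(Sd n * w + Id * u n)
        + BB/2*(\<Sum>i\<in>{1..<n}. 2*(Sd i * u i)) + AA/2*(2*(((\<Sum>j=0..n. Sd j) + Id) * z))
      = Vd \<delta> Iw Se u w z (I t)"
  proof -
    have Ze2: "(\<Sum>j=0..n. Sd j) + I t * Yf u = -\<mu> * z" using Ze Ide by simp
    show ?thesis unfolding mid Ide Ze2 Vd_def SDe[OF n1 order_refl] by (simp add: algebra_simps power2_eq_square)
  qed
  show ?thesis using all[unfolded eqv] unfolding u_def w_def z_def .
qed

end

context wm begin

lemma kk_bounds:
  assumes "slow \<le> Se n" "Se n \<le> 2"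
  shows "k0 \<le> kk Se" "kk Se \<le> k1"
proof -
  note cp = consts_pos
  have sp: "\<beta> n * Se n > 0" using assms cp bnpos by (simp add: mult_pos_pos)
  have "\<beta> n * Se n \<le> 2 * \<beta> n" using assms bnpos by simp
  hence "(\<beta> n - \<beta> 0)/(2 * \<beta> n) \<le> (\<beta> n - \<beta> 0)/(\<beta> n * Se n)"
    using bn sp by (intro divide_left_mono) auto
  thus "k0 \<le> kk Se" unfolding kk_def k0_def .
  have "\<sigma>0 \<le> \<beta> n * Se n" unfolding \<sigma>0_def using assms bnpos by simp
  hence "(\<beta> n - \<beta> 0)/(\<beta> n * Se n) \<le> (\<beta> n - \<beta> 0)/\<sigma>0"
    using bn cp by (intro divide_left_mono) auto
  thus "kk Se \<le> k1" unfolding kk_def k1_def .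
qed

definition "c1 = min (min (k0/4) (1/4)) (min (BB/2) (AA/2))"
definition "c2 Iw = k1/2 + 1/(2*Iw) + 1/2 + BB/2 + AA/2"

lemma c1_pos: "c1 > 0" unfolding c1_def using consts_pos by simp

lemma eps_le: "eps \<le> k0/2" "eps \<le> 1/2"
proof -
  have a: "eps \<le> min (k0/2) (1/2)" unfolding eps_def by (rule min.cobounded1)
  show "eps \<le> k0/2" using a by linarith
  show "eps \<le> 1/2" using a by linarith
qed

lemma V_lower:
  assumes "0 < Iw" "Iw \<le> 1" "slow \<le> Se n" "Se n \<le> 2"
  shows "c1 * Qf u w z \<le> Vf Iw Se u w z"
proof -
  note cp = consts_pos
  define k where "k = kk Se"
  have kb: "k0 \<le> k" using kk_bounds[of Se, OF assms(3,4)] unfolding k_def by simp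
  have kp: "k > 0" using kb cp by linarith
  have "(-eps)*u n*w \<le> (k/4)*(u n)^2 + eps^2/(4*(k/4))*w^2"
    by (rule young) (use kp cp in auto)
  moreover have "eps^2/(4*(k/4)) \<le> 1/4"
  proof -
    have "eps*eps \<le> (k/2)*(1/2)" using eps_le kb cp by (intro mult_mono) auto
    thus ?thesis using kp by (simp add: power2_eq_square divide_le_eq)
  qed
  hence "eps^2/(4*(k/4))*w^2 \<le> 1/4*w^2" by (intro mult_right_mono) auto
  moreover have "w^2/2 \<le> w^2/(2*Iw)"
  proof -
    have "w^2*Iw \<le> w^2" using assms mult_left_mono[of Iw 1 "w^2"] by simp
    thus ?thesis using assms by (simp add: field_simps)
  qed
  moreover have "Um u \<ge> 0" by (rule Q_nonneg)
  moreover have "c1*(u n)^2 \<le> (k/4)*(u n)^2" unfolding c1_def using kb by (intro mult_right_mono) auto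
  moreover have "c1*w^2 \<le> (1/4)*w^2" unfolding c1_def by (intro mult_right_mono) auto
  moreover have "c1*Um u \<le> (BB/2)*Um u" unfolding c1_def using Q_nonneg(1)[of u] by (intro mult_right_mono) auto
  moreover have "c1*z^2 \<le> (AA/2)*z^2" unfolding c1_def by (intro mult_right_mono) auto
  moreover have "c1 * Qf u w z = c1*(u n)^2 + c1*w^2 + c1*z^2 + c1*Um u" unfolding Qf_def by (simp add: algebra_simps)
  moreover have "Vf Iw Se u w z = (k/2)*(u n)^2 + w^2/(2*Iw) + eps*(u n*w) + BB/2*Um u + AA/2*z^2"
    unfolding Vf_def k_def by simp
  moreover have "(-eps)*u n*w = -(eps*(u n*w))" by simp
  ultimately show ?thesis by (simp add: algebra_simps)
qed

lemma V_upper: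
  assumes "0 < Iw" "slow \<le> Se n" "Se n \<le> 2"
  shows "Vf Iw Se u w z \<le> c2 Iw * Qf u w z"
proof -
  note cp = consts_pos
  define k where "k = kk Se"
  have kb: "k \<le> k1" "k0 \<le> k" using kk_bounds[of Se, OF assms(2,3)] unfolding k_def by auto
  have "eps*u n*w \<le> eps/2*(u n)^2 + eps/2*w^2" by (rule young2) (use cp in simp)
  hence e: "eps*(u n*w) \<le> 1/4*(u n)^2 + 1/4*w^2"
    using eps_le mult_right_mono[of eps "1/2" "(u n)^2"] mult_right_mono[of eps "1/2" "w^2"]
    by (simp add: mult.assoc)
  have X: "0 \<le> (u n)^2" "0 \<le> w^2" "0 \<le> z^2" "0 \<le> Um u" using Q_nonneg(1)[of u] by auto
  have c2p: "k1/2 + 1/4 \<le> c2 Iw" "1/(2*Iw) + 1/4 \<le> c2 Iw" "BB/2 \<le> c2 Iw" "AA/2 \<le> c2 Iw"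
    unfolding c2_def using cp assms by auto
  have "(k/2)*(u n)^2 + 1/4*(u n)^2 \<le> c2 Iw * (u n)^2"
  proof -
    have "k/2 + 1/4 \<le> c2 Iw" using c2p kb by linarith
    from mult_right_mono[OF this X(1)] show ?thesis by (simp add: algebra_simps)
  qed
  moreover have "w^2/(2*Iw) + 1/4*w^2 \<le> c2 Iw * w^2"
  proof -
    from mult_right_mono[OF c2p(2) X(2)] show ?thesis by (simp add: algebra_simps)
  qed
  moreover have "BB/2*Um u \<le> c2 Iw * Um u" using c2p X by (intro mult_right_mono) auto
  moreover have "AA/2*z^2 \<le> c2 Iw * z^2" using c2p X by (intro mult_right_mono) auto
  moreover have "c2 Iw * Qf u w z = c2 Iw*(u n)^2 + c2 Iw*w^2 + c2 Iw*z^2 + c2 Iw*Um u" unfolding Qf_def by (simp add: algebra_simps)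
  moreover have "Vf Iw Se u w z = (k/2)*(u n)^2 + w^2/(2*Iw) + eps*(u n*w) + BB/2*Um u + AA/2*z^2"
    unfolding Vf_def k_def by simp
  ultimately show ?thesis using e by linarith
qed

end

lemma sq_le_of_abs: "\<bar>a\<bar> \<le> (b::real) \<Longrightarrow> a^2 \<le> b^2"
  by (metis abs_ge_zero abs_le_square_iff abs_of_nonneg order_trans)

lemma ode_sol_restrict:
  assumes "ode_sol n \<delta> \<omega> r \<mu> p \<beta> {0..} S I"
  shows "ode_sol n \<delta> \<omega> r \<mu> p \<beta> {0..<T} S I"
proof -
  have sub: "{0..<T} \<subseteq> {0..}" by auto
  show ?thesis unfolding ode_sol_def
  proof (intro ballI conjI allI impI)
    fix t i assume t: "t \<in> {0..<T}" and i: "i \<le> n"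
    have t': "t \<in> {0..}" using t by simp
    show "((\<lambda>\<tau>. S \<tau> i) has_real_derivative Sdot n \<delta> \<omega> r \<mu> p \<beta> (S t) (I t) i) (at t within {0..<T})"
      using assms t' i sub unfolding ode_sol_def by (blast intro: DERIV_subset)
  next
    fix t assume t: "t \<in> {0..<T}"
    have t': "t \<in> {0..}" using t by simp
    show "(I has_real_derivative Idot n r \<mu> \<beta> (S t) (I t)) (at t within {0..<T})"
      using assms t' sub unfolding ode_sol_def by (blast intro: DERIV_subset)
  qed
qed

lemma abs_lt_of_sq: "a^2 < b^2 \<Longrightarrow> 0 < (b::real) \<Longrightarrow> \<bar>a\<bar> < b"
  using abs_le_square_iff[of b a] by auto

lemma sq_tendsto:
  fixes f g :: "real \<Rightarrow> real"
  assumes "\<And>t. t \<ge> 0 \<Longrightarrow> (f t)^2 \<le> g t" "(g \<longlongrightarrow> 0) at_top"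
  shows "(f \<longlongrightarrow> 0) at_top"
proof (rule Lim_null_comparison)
  show "((\<lambda>t. sqrt (g t)) \<longlongrightarrow> 0) at_top" using tendsto_real_sqrt[OF assms(2)] by simp
  have "\<forall>t\<ge>0. norm (f t) \<le> sqrt (g t)"
  proof (intro allI impI)
    fix t :: real assume "t \<ge> 0"
    hence "\<bar>f t\<bar>^2 \<le> g t" using assms(1) by simp
    thus "norm (f t) \<le> sqrt (g t)" by (simp add: real_le_rsqrt)
  qed
  thus "\<forall>\<^sub>F t in at_top. norm (f t) \<le> sqrt (g t)" unfolding eventually_at_top_linorder by blast
qed

locale wm_eq = wm +
  fixes \<delta> :: real and Se :: "nat \<Rightarrow> real" and Ie :: real
  assumes eq: "endemic_eq n \<delta> \<omega> r \<mu> p \<beta> Se Ie" and d0: "0 \<le> \<delta>" and ddc: "\<delta> \<le> dc"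
    and Sn_lo: "slow \<le> Se n" and Sn_hi: "Se n \<le> 2" and Smid: "\<forall>i\<in>{1..<n}. \<bar>Se i\<bar> \<le> \<delta>/\<mu>"
begin

definition "uu S = (\<lambda>j. S j - Se j)"
definition "zz S I = (\<Sum>j=0..n. S j - Se j) + (I - Ie)"
definition "VV S I = Vf Ie Se (uu S) (I - Ie) (zz S I)"
definition "QQ S I = Qf (uu S) (I - Ie) (zz S I)"
definition "e1 = eps*\<sigma>0/8"
definition "Qmax = min (Ie^2) ((e1*Ie)^2/(5*real n*(real n+1)*(\<beta> n)^2))"
definition "lam = c0/(2*c2 Ie)"

lemma Ie: "0 < Ie" "Ie \<le> 1" using Se_facts(4,5)[OF eq] by auto

lemma c2p: "c2 Ie > 0" unfolding c2_def using consts_pos Ie by (simp add: add_pos_pos)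

lemma lam_pos: "lam > 0" unfolding lam_def using c2p consts_pos by simp

lemma Qmax_pos: "Qmax > 0"
  unfolding Qmax_def e1_def using Ie consts_pos bnpos n1 by simp

lemma VV_bounds: "c1 * QQ S I \<le> VV S I" "VV S I \<le> c2 Ie * QQ S I" "0 \<le> VV S I" "0 \<le> QQ S I"
proof -
  show a: "c1 * QQ S I \<le> VV S I" unfolding VV_def QQ_def by (rule V_lower) (use Ie Sn_lo Sn_hi in auto)
  show "VV S I \<le> c2 Ie * QQ S I" unfolding VV_def QQ_def by (rule V_upper) (use Ie Sn_lo Sn_hi in auto)
  show q: "0 \<le> QQ S I" unfolding QQ_def by (rule Q_nonneg)
  show "0 \<le> VV S I" using a q c1_pos by (smt (verit) mult_nonneg_nonneg)
qed

lemma dev_bounds: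
  shows "i \<le> n \<Longrightarrow> (S i - Se i)^2 \<le> 5 * real n * QQ S I" "(I - Ie)^2 \<le> QQ S I"
proof -
  have P: "(\<Sum>i=0..n. (uu S i)^2) + (I - Ie)^2 \<le> 5 * real n * QQ S I"
    unfolding QQ_def by (rule P_bound) (simp add: zz_def uu_def)
  have s0: "0 \<le> (\<Sum>i=0..n. (uu S i)^2)" by (intro sum_nonneg) auto
  assume "i \<le> n"
  then have "(uu S i)^2 \<le> (\<Sum>i=0..n. (uu S i)^2)" by (rule P_ge)
  then show "(S i - Se i)^2 \<le> 5 * real n * QQ S I" using P zero_le_power2[of "I - Ie"] unfolding uu_def by linarith
next
  show "(I - Ie)^2 \<le> QQ S I" unfolding QQ_def Qf_def using Q_nonneg(1)[of "uu S"] by simp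
qed

lemma in_region:
  assumes Q: "QQ S I \<le> Qmax"
  shows "Vd \<delta> Ie Se (uu S) (I - Ie) (zz S I) I \<le> -(c0/2) * QQ S I"
proof -
  define u where "u = uu S"
  define w where "w = I - Ie"
  define z where "z = zz S I"
  have Qd: "QQ S I = Qf u w z" unfolding QQ_def u_def w_def z_def ..
  have w2: "w^2 \<le> Ie^2"
  proof -
    have "w^2 \<le> QQ S I" unfolding w_def by (rule dev_bounds(2))
    also have "\<dots> \<le> Ie^2" using Q unfolding Qmax_def by simp
    finally show ?thesis .
  qed
  hence "\<bar>w\<bar> \<le> Ie" using Ie abs_le_square_iff[of w Ie] by simp
  hence I02: "0 \<le> I" "I \<le> 2" using Ie unfolding w_def by auto
  have zdef: "z = (\<Sum>i=0..n. u i) + w" unfolding z_def zz_def u_def uu_def w_def ..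
  define Y where "Y = Yf u"
  have Y2: "Y^2 \<le> (real n + 1) * (\<beta> n)^2 * (\<Sum>i=0..n. (u i)^2)"
  proof -
    have "Y^2 \<le> (\<Sum>i=0..n. (\<beta> i)^2) * (\<Sum>i=0..n. (u i)^2)"
      unfolding Y_def Yf_def by (rule Cauchy_Schwarz_ineq_sum)
    moreover have "(\<Sum>i=0..n. (\<beta> i)^2) \<le> (real n + 1) * (\<beta> n)^2"
    proof -
      have "(\<Sum>i=0..n. (\<beta> i)^2) \<le> of_nat (card {0..n}) * (\<beta> n)^2"
      proof (rule sum_bounded_above)
        fix i assume "i \<in> {0..n}"
        hence "\<beta> 0 \<le> \<beta> i \<and> \<beta> i \<le> \<beta> n" by (intro beta_range) auto
        thus "(\<beta> i)^2 \<le> (\<beta> n)^2" using b0 by (intro power_mono) auto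
      qed
      thus ?thesis by (simp add: algebra_simps)
    qed
    moreover have "0 \<le> (\<Sum>i=0..n. (u i)^2)" by (intro sum_nonneg) auto
    ultimately show ?thesis by (meson mult_right_mono order_trans)
  qed
  have Pb: "(\<Sum>i=0..n. (u i)^2) \<le> 5 * real n * QQ S I"
  proof -
    have "(\<Sum>i=0..n. (u i)^2) + w^2 \<le> 5 * real n * Qf u w z" by (rule P_bound[OF zdef])
    thus ?thesis unfolding Qd using zero_le_power2[of w] by linarith
  qed
  have Y2b: "Y^2 \<le> (e1*Ie)^2"
  proof -
    have np: "0 < (real n + 1) * (\<beta> n)^2" "0 < 5*real n" using bnpos n1 by auto
    have "Y^2 \<le> (real n + 1) * (\<beta> n)^2 * (5 * real n * QQ S I)"
      using Y2 Pb np by (meson mult_left_mono order_trans less_imp_le)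
    also have "\<dots> \<le> (real n + 1) * (\<beta> n)^2 * (5 * real n * ((e1*Ie)^2/(5*real n*(real n+1)*(\<beta> n)^2)))"
    proof -
      have "QQ S I \<le> (e1*Ie)^2/(5*real n*(real n+1)*(\<beta> n)^2)" using Q unfolding Qmax_def by simp
      thus ?thesis using np by (intro mult_left_mono) auto
    qed
    also have "\<dots> = (e1*Ie)^2"
    proof -
      define D where "D = 5*real n*(real n+1)*(\<beta> n)^2"
      have Dp: "D \<noteq> 0" unfolding D_def using np bnpos by simp
      have "(real n + 1) * (\<beta> n)^2 * (5 * real n * ((e1*Ie)^2/D)) = D * ((e1*Ie)^2/D)"
        unfolding D_def by (simp add: algebra_simps)
      also have "\<dots> = (e1*Ie)^2" using Dp by simp
      finally show ?thesis unfolding D_def .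
    qed
    finally show ?thesis .
  qed
  have e1p: "e1 > 0" unfolding e1_def using consts_pos by simp
  have Yb: "Y \<le> e1*Ie" using Y2b abs_le_square_iff[of Y "e1*Ie"] e1p Ie by auto
  have cub: "w/Ie*(I*Yf u) - w*Yf u \<le> eps*\<sigma>0/8 * w^2"
  proof -
    have "w/Ie*(I*Y) - w*Y = w^2 * (Y/Ie)" unfolding w_def using Ie by (simp add: field_simps power2_eq_square)
    also have "\<dots> \<le> w^2 * e1" using Yb Ie by (intro mult_left_mono) (auto simp: divide_le_eq)
    finally show ?thesis unfolding Y_def e1_def by (simp add: algebra_simps)
  qed
  have "Vd \<delta> Ie Se u w z I \<le> -(c0/2) * Qf u w z"
    by (rule core[OF zdef d0 ddc I02 Sn_lo Sn_hi Smid cub])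
  thus ?thesis unfolding Qd u_def w_def z_def .
qed


lemma decay:
  assumes sol: "ode_sol n \<delta> \<omega> r \<mu> p \<beta> {0..<T} S I"
    and V0: "VV (S 0) (I 0) < c1 * Qmax"
    and t: "t \<in> {0..<T}"
  shows "VV (S t) (I t) * exp (lam*t) \<le> VV (S 0) (I 0)"
proof -
  define h where "h \<tau> = VV (S \<tau>) (I \<tau>) * exp (lam*\<tau>)" for \<tau>
  define h' where "h' \<tau> = (Vd \<delta> Ie Se (uu (S \<tau>)) (I \<tau> - Ie) (zz (S \<tau>) (I \<tau>)) (I \<tau>) + lam * VV (S \<tau>) (I \<tau>)) * exp (lam*\<tau>)" for \<tau>
  have der: "(h has_real_derivative h' \<tau>) (at \<tau> within {0..<T})" if \<tau>: "\<tau> \<in> {0..<T}" for \<tau>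
  proof -
    have dV: "((\<lambda>\<tau>. VV (S \<tau>) (I \<tau>)) has_real_derivative Vd \<delta> Ie Se (uu (S \<tau>)) (I \<tau> - Ie) (zz (S \<tau>) (I \<tau>)) (I \<tau>)) (at \<tau> within {0..<T})"
      unfolding VV_def uu_def zz_def by (rule V_deriv[OF eq sol \<tau>])
    have dE: "((\<lambda>\<tau>. exp (lam*\<tau>)) has_real_derivative exp (lam*\<tau>) * lam) (at \<tau> within {0..<T})"
      by (auto intro!: derivative_eq_intros)
    from DERIV_mult[OF dV dE] show ?thesis unfolding h_def[abs_def] h'_def by (simp add: algebra_simps)
  qed
  have neg: "h' \<tau> \<le> 0" if \<tau>: "\<tau> \<in> {0..<T}" and hM: "h \<tau> \<le> c1 * Qmax" for \<tau>
  proof -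
    have e1: "1 \<le> exp (lam*\<tau>)" using \<tau> lam_pos by simp
    have V0': "0 \<le> VV (S \<tau>) (I \<tau>)" by (rule VV_bounds(3))
    have "VV (S \<tau>) (I \<tau>) \<le> h \<tau>" unfolding h_def using e1 V0' mult_left_mono[OF e1 V0'] by simp
    hence "c1 * QQ (S \<tau>) (I \<tau>) \<le> c1 * Qmax" using VV_bounds(1)[of "S \<tau>" "I \<tau>"] hM by linarith
    hence Q: "QQ (S \<tau>) (I \<tau>) \<le> Qmax" using c1_pos by simp
    have a: "Vd \<delta> Ie Se (uu (S \<tau>)) (I \<tau> - Ie) (zz (S \<tau>) (I \<tau>)) (I \<tau>) \<le> -(c0/2) * QQ (S \<tau>) (I \<tau>)"
      by (rule in_region[OF Q])
    have "lam * VV (S \<tau>) (I \<tau>) \<le> lam * (c2 Ie * QQ (S \<tau>) (I \<tau>))"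
      using VV_bounds(2) lam_pos by (intro mult_left_mono) auto
    also have "\<dots> = (c0/2) * QQ (S \<tau>) (I \<tau>)" unfolding lam_def using c2p by simp
    finally have "Vd \<delta> Ie Se (uu (S \<tau>)) (I \<tau> - Ie) (zz (S \<tau>) (I \<tau>)) (I \<tau>) + lam * VV (S \<tau>) (I \<tau>) \<le> 0"
      using a by linarith
    thus ?thesis unfolding h'_def by (simp add: mult_nonpos_nonneg)
  qed
  have "h t \<le> h 0"
    by (rule exit_lemma[of T h h' "c1*Qmax"]) (use der neg V0 t in \<open>auto simp: h_def\<close>)
  thus ?thesis unfolding h_def by simp
qed

lemma Q0_bound:
  assumes "\<forall>i\<le>n. \<bar>S i - Se i\<bar> < \<eta>" "\<bar>I - Ie\<bar> < \<eta>"
  shows "QQ S I \<le> 2*(real n+2)^2*\<eta>^2"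
proof -
  have \<eta>0: "0 \<le> \<eta>" using assms(2) by linarith
  have un: "(S n - Se n)^2 \<le> \<eta>^2" using assms by (intro sq_le_of_abs) auto
  have w: "(I - Ie)^2 \<le> \<eta>^2" using assms by (intro sq_le_of_abs) auto
  have U: "Um (uu S) \<le> real n * \<eta>^2"
  proof -
    have "Um (uu S) \<le> of_nat (card {1..<n}) * \<eta>^2" unfolding Um_def uu_def
    proof (rule sum_bounded_above)
      fix i assume "i \<in> {1..<n}"
      hence "\<bar>S i - Se i\<bar> < \<eta>" using assms(1) by auto
      thus "(S i - Se i)^2 \<le> \<eta>^2" by (intro sq_le_of_abs) auto
    qed
    also have "\<dots> \<le> real n * \<eta>^2" by (intro mult_right_mono) auto
    finally show ?thesis .
  qed
  have Z: "(zz S I)^2 \<le> ((real n + 2)*\<eta>)^2"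
  proof (rule sq_le_of_abs)
    have "\<bar>zz S I\<bar> \<le> (\<Sum>j=0..n. \<bar>S j - Se j\<bar>) + \<bar>I - Ie\<bar>"
      unfolding zz_def by (metis (no_types) abs_triangle_ineq order_trans add_mono order_refl sum_abs)
    also have "\<dots> \<le> of_nat (card {0..n}) * \<eta> + \<eta>"
      by (intro add_mono sum_bounded_above) (use assms in \<open>auto simp: less_imp_le\<close>)
    also have "\<dots> = (real n + 2)*\<eta>" by (simp add: algebra_simps)
    finally show "\<bar>zz S I\<bar> \<le> (real n + 2)*\<eta>" .
  qed
  have "QQ S I = (S n - Se n)^2 + (I - Ie)^2 + (zz S I)^2 + Um (uu S)" unfolding QQ_def Qf_def uu_def by simp
  also have "\<dots> \<le> \<eta>^2 + \<eta>^2 + ((real n + 2)*\<eta>)^2 + real n * \<eta>^2" using un w Z U by linarith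
  also have "\<dots> \<le> 2*(real n+2)^2*\<eta>^2"
  proof -
    have "2 + real n \<le> (real n + 2)^2" by (simp add: power2_eq_square algebra_simps)
    hence "(2 + real n)*\<eta>^2 \<le> (real n + 2)^2*\<eta>^2" by (intro mult_right_mono) auto
    moreover have "((real n + 2)*\<eta>)^2 = (real n + 2)^2*\<eta>^2" by (simp add: power_mult_distrib)
    moreover have "(2 + real n)*\<eta>^2 = \<eta>^2 + \<eta>^2 + real n * \<eta>^2" by (simp add: algebra_simps)
    ultimately show ?thesis by linarith
  qed
  finally show ?thesis .
qed


lemma small_init:
  assumes \<epsilon>: "\<epsilon> > 0"
  shows "\<exists>\<eta>>0. \<forall>S I. (\<forall>i\<le>n. \<bar>S i - Se i\<bar> < \<eta>) \<and> \<bar>I - Ie\<bar> < \<eta> \<longrightarrow>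
            VV S I < c1 * Qmax \<and> VV S I < c1 * \<epsilon>^2 / (5 * real n)"
proof -
  define K0 where "K0 = 2*(real n+2)^2"
  define B0 where "B0 = min (c1 * Qmax) (c1 * \<epsilon>^2 / (5 * real n))"
  have K0p: "K0 > 0" unfolding K0_def by simp
  have B0p: "B0 > 0" unfolding B0_def using c1_pos Qmax_pos \<epsilon> n1 by simp
  define \<eta> where "\<eta> = sqrt (B0 / (2 * c2 Ie * K0))"
  have arg: "B0 / (2 * c2 Ie * K0) > 0" using B0p c2p K0p by simp
  have \<eta>p: "\<eta> > 0" unfolding \<eta>_def using arg by simp
  have \<eta>2: "\<eta>^2 = B0 / (2 * c2 Ie * K0)" unfolding \<eta>_def using arg by simp
  show ?thesis
  proof (intro exI[of _ \<eta>] conjI allI impI)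
    show "\<eta> > 0" by (rule \<eta>p)
    fix S I assume h: "(\<forall>i\<le>n. \<bar>S i - Se i\<bar> < \<eta>) \<and> \<bar>I - Ie\<bar> < \<eta>"
    have "QQ S I \<le> K0 * \<eta>^2" using Q0_bound[of S \<eta> I] h unfolding K0_def by simp
    hence "VV S I \<le> c2 Ie * (K0 * \<eta>^2)" using VV_bounds(2)[of S I] c2p by (meson mult_left_mono order_trans less_imp_le)
    also have "\<dots> = B0 / 2" unfolding \<eta>2 using c2p K0p by (simp add: field_simps)
    also have "\<dots> < B0" using B0p by simp
    finally have "VV S I < B0" .
    thus "VV S I < c1 * Qmax" "VV S I < c1 * \<epsilon>^2 / (5 * real n)" unfolding B0_def by auto
  qed
qed

lemma stable: "loc_asymp_stable n \<delta> \<omega> r \<mu> p \<beta> Se Ie"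
  unfolding loc_asymp_stable_def
proof (intro conjI allI impI)
  have np: "0 < 5 * real n" using n1 by simp
  fix \<epsilon> :: real assume \<epsilon>: "\<epsilon> > 0"
  obtain \<eta> where \<eta>: "\<eta> > 0" and H: "\<And>S I. (\<forall>i\<le>n. \<bar>S i - Se i\<bar> < \<eta>) \<and> \<bar>I - Ie\<bar> < \<eta> \<Longrightarrow>
            VV S I < c1 * Qmax \<and> VV S I < c1 * \<epsilon>^2 / (5 * real n)"
    using small_init[OF \<epsilon>] by blast
  show "\<exists>\<eta>>0. \<forall>T>0. \<forall>S I. ode_sol n \<delta> \<omega> r \<mu> p \<beta> {0..<T} S I \<and> (\<forall>i\<le>n. \<bar>S 0 i - Se i\<bar> < \<eta>) \<and> \<bar>I 0 - Ie\<bar> < \<eta> \<longrightarrow>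
      (\<forall>t\<in>{0..<T}. (\<forall>i\<le>n. \<bar>S t i - Se i\<bar> < \<epsilon>) \<and> \<bar>I t - Ie\<bar> < \<epsilon>)"
  proof -
    have main: "(\<forall>i\<le>n. \<bar>S t i - Se i\<bar> < \<epsilon>) \<and> \<bar>I t - Ie\<bar> < \<epsilon>"
      if h: "ode_sol n \<delta> \<omega> r \<mu> p \<beta> {0..<T} S I \<and> (\<forall>i\<le>n. \<bar>S 0 i - Se i\<bar> < \<eta>) \<and> \<bar>I 0 - Ie\<bar> < \<eta>"
      and t: "t \<in> {0..<T}" for T S I t
    proof -
    have V0: "VV (S 0) (I 0) < c1 * Qmax" "VV (S 0) (I 0) < c1 * \<epsilon>^2 / (5 * real n)" using H[of "S 0" "I 0"] h by auto
    have dec: "VV (S t) (I t) * exp (lam*t) \<le> VV (S 0) (I 0)" using decay[of T S I t] V0(1) t h by blast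
    have e1: "1 \<le> exp (lam*t)" using t lam_pos by simp
    have "VV (S t) (I t) \<le> VV (S t) (I t) * exp (lam*t)"
      using mult_left_mono[OF e1 VV_bounds(3)] by simp
    hence "VV (S t) (I t) < c1 * \<epsilon>^2 / (5 * real n)" using dec V0 by linarith
    moreover have "c1 * \<epsilon>^2 / (5 * real n) = c1 * (\<epsilon>^2 / (5 * real n))" by simp
    ultimately have "c1 * QQ (S t) (I t) < c1 * (\<epsilon>^2 / (5 * real n))" using VV_bounds(1)[of "S t" "I t"] by linarith
    hence Q: "QQ (S t) (I t) < \<epsilon>^2 / (5 * real n)" by (simp only: mult_less_cancel_left_pos[OF c1_pos])
    have Q5: "5 * real n * QQ (S t) (I t) < \<epsilon>^2" using Q np by (simp add: field_simps)
    have Q1: "QQ (S t) (I t) < \<epsilon>^2"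
    proof -
      have "1 * QQ (S t) (I t) \<le> (5 * real n) * QQ (S t) (I t)" using VV_bounds(4) n1
        by (intro mult_right_mono) auto
      thus ?thesis using Q5 by linarith
    qed
    show "(\<forall>i\<le>n. \<bar>S t i - Se i\<bar> < \<epsilon>) \<and> \<bar>I t - Ie\<bar> < \<epsilon>"
    proof (intro conjI allI impI)
      fix i assume "i \<le> n"
      from dev_bounds(1)[OF this, of "S t" "I t"] Q5 have "(S t i - Se i)^2 < \<epsilon>^2" by linarith
      thus "\<bar>S t i - Se i\<bar> < \<epsilon>" using \<epsilon> by (rule abs_lt_of_sq)
    next
      from dev_bounds(2)[of "I t" "S t"] Q1 have "(I t - Ie)^2 < \<epsilon>^2" by linarith
      thus "\<bar>I t - Ie\<bar> < \<epsilon>" using \<epsilon> by (rule abs_lt_of_sq)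
    qed
    qed
    show ?thesis using \<eta> main by blast
  qed
next
  have np: "0 < 5 * real n" using n1 by simp
  obtain \<eta> where \<eta>: "\<eta> > 0" and H: "\<And>S I. (\<forall>i\<le>n. \<bar>S i - Se i\<bar> < \<eta>) \<and> \<bar>I - Ie\<bar> < \<eta> \<Longrightarrow>
            VV S I < c1 * Qmax \<and> VV S I < c1 * 1^2 / (5 * real n)"
    using small_init[of 1] by auto
  show "\<exists>\<eta>>0. \<forall>S I. ode_sol n \<delta> \<omega> r \<mu> p \<beta> {0..} S I \<and> (\<forall>i\<le>n. \<bar>S 0 i - Se i\<bar> < \<eta>) \<and> \<bar>I 0 - Ie\<bar> < \<eta> \<longrightarrow>
        (\<forall>i\<le>n. ((\<lambda>t. S t i) \<longlongrightarrow> Se i) at_top) \<and> (I \<longlongrightarrow> Ie) at_top"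
  proof (rule exI[of _ \<eta>], rule conjI[OF \<eta>], intro allI impI)
    fix S I
    assume h: "ode_sol n \<delta> \<omega> r \<mu> p \<beta> {0..} S I \<and> (\<forall>i\<le>n. \<bar>S 0 i - Se i\<bar> < \<eta>) \<and> \<bar>I 0 - Ie\<bar> < \<eta>"
    have V0: "VV (S 0) (I 0) < c1 * Qmax" using H[of "S 0" "I 0"] h by auto
    define g where "g t = 5 * real n / c1 * VV (S 0) (I 0) * exp (-(lam*t))" for t
    have Qt: "QQ (S t) (I t) \<le> VV (S 0) (I 0) * exp (-(lam*t)) / c1" if t: "t \<ge> 0" for t
    proof -
      have sol: "ode_sol n \<delta> \<omega> r \<mu> p \<beta> {0..<t+1} S I" using h ode_sol_restrict by blast
      have "VV (S t) (I t) * exp (lam*t) \<le> VV (S 0) (I 0)" using decay[OF sol V0] t by simp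
      hence "VV (S t) (I t) * exp (lam*t) * exp (-(lam*t)) \<le> VV (S 0) (I 0) * exp (-(lam*t))"
        by (intro mult_right_mono) auto
      hence "VV (S t) (I t) \<le> VV (S 0) (I 0) * exp (-(lam*t))" by (simp add: mult.assoc exp_minus_inverse)
      hence "c1 * QQ (S t) (I t) \<le> VV (S 0) (I 0) * exp (-(lam*t))" using VV_bounds(1)[of "S t" "I t"] by linarith
      thus ?thesis using c1_pos by (simp add: field_simps)
    qed
    have gt: "(g \<longlongrightarrow> 0) at_top"
    proof -
      have "filterlim (\<lambda>t. lam * t) at_top at_top"
        by (rule filterlim_tendsto_pos_mult_at_top[OF tendsto_const lam_pos filterlim_ident])
      hence "filterlim (\<lambda>t. -(lam * t)) at_bot at_top" by (simp add: filterlim_uminus_at_bot)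
      hence "((\<lambda>t. exp (-(lam*t))) \<longlongrightarrow> 0) at_top" by (rule filterlim_compose[OF exp_at_bot])
      hence "((\<lambda>t. 5 * real n / c1 * VV (S 0) (I 0) * exp (-(lam*t))) \<longlongrightarrow> 5 * real n / c1 * VV (S 0) (I 0) * 0) at_top"
        by (intro tendsto_mult tendsto_const)
      thus ?thesis unfolding g_def by simp
    qed
    have A: "\<forall>i\<le>n. ((\<lambda>t. S t i) \<longlongrightarrow> Se i) at_top"
    proof (intro allI impI)
      fix i assume i: "i \<le> n"
      have "((\<lambda>t. S t i - Se i) \<longlongrightarrow> 0) at_top"
      proof (rule sq_tendsto[OF _ gt])
        fix t :: real assume t: "t \<ge> 0"
        have "(S t i - Se i)^2 \<le> 5 * real n * QQ (S t) (I t)" by (rule dev_bounds(1)[OF i])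
        also have "\<dots> \<le> 5 * real n * (VV (S 0) (I 0) * exp (-(lam*t)) / c1)"
          using Qt[OF t] np by (intro mult_left_mono) auto
        also have "\<dots> = g t" unfolding g_def by simp
        finally show "(S t i - Se i)^2 \<le> g t" .
      qed
      thus "((\<lambda>t. S t i) \<longlongrightarrow> Se i) at_top" by (rule LIM_zero_cancel)
    qed
    have "((\<lambda>t. I t - Ie) \<longlongrightarrow> 0) at_top"
    proof (rule sq_tendsto[OF _ gt])
      fix t :: real assume t: "t \<ge> 0"
      have "(I t - Ie)^2 \<le> QQ (S t) (I t)" by (rule dev_bounds(2))
      also have "\<dots> \<le> VV (S 0) (I 0) * exp (-(lam*t)) / c1" by (rule Qt[OF t])
      also have "\<dots> \<le> g t"
      proof -
        have "0 \<le> VV (S 0) (I 0) * exp (-(lam*t)) / c1" using VV_bounds(3) c1_pos by simp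
        moreover have "1 \<le> 5 * real n" using n1 by simp
        ultimately have "1 * (VV (S 0) (I 0) * exp (-(lam*t)) / c1) \<le> (5 * real n) * (VV (S 0) (I 0) * exp (-(lam*t)) / c1)"
          by (intro mult_right_mono) auto
        thus ?thesis unfolding g_def by simp
      qed
      finally show "(I t - Ie)^2 \<le> g t" .
    qed
    hence B: "(I \<longlongrightarrow> Ie) at_top" by (rule LIM_zero_cancel)
    from A B show "(\<forall>i\<le>n. ((\<lambda>t. S t i) \<longlongrightarrow> Se i) at_top) \<and> (I \<longlongrightarrow> Ie) at_top" by blast
  qed
qed


lemma unique:
  assumes eq': "endemic_eq n \<delta> \<omega> r \<mu> p \<beta> S' I'"
  shows "I' = Ie \<and> (\<forall>i\<le>n. S' i = Se i)"
proof -
  have I': "0 < I'" "I' \<le> 1" using Se_facts(4,5)[OF eq'] by auto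
  define u where "u = uu S'"
  define w where "w = I' - Ie"
  define z where "z = zz S' I'"
  have zdef: "z = (\<Sum>i=0..n. u i) + w" unfolding z_def zz_def u_def uu_def w_def ..
  have z0: "z = 0"
  proof -
    have "z = ((\<Sum>i=0..n. S' i) + I') - ((\<Sum>i=0..n. Se i) + Ie)" unfolding z_def zz_def
      by (simp add: sum_subtractf)
    thus ?thesis using Se_facts(3)[OF eq] Se_facts(3)[OF eq'] by simp
  qed
  have I02: "0 \<le> I'" "I' \<le> 2" using I' by auto
  have cub: "w/I'*(I'*Yf u) - w*Yf u \<le> eps*\<sigma>0/8 * w^2"
    using I' consts_pos by simp
  have c: "Vd \<delta> I' Se u w z I' \<le> -(c0/2) * Qf u w z"
    by (rule core[OF zdef d0 ddc I02 Sn_lo Sn_hi Smid cub])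
  have Sd0: "SD \<delta> Se u w I' i = 0" if "1 \<le> i" "i \<le> n" for i
  proof -
    have "Sdot n \<delta> \<omega> r \<mu> p \<beta> S' I' i = 0" using Se_facts(1)[OF eq'] that by auto
    thus ?thesis using dev_SD[OF eq that, of S' I'] unfolding u_def uu_def w_def by simp
  qed
  have Id0: "I' * Yf u = 0"
  proof -
    have "Idot n r \<mu> \<beta> S' I' = 0" using eq' unfolding endemic_eq_def is_equilibrium_def by auto
    thus ?thesis using dev_I[OF eq, of S' I'] unfolding u_def uu_def by simp
  qed
  have "Vd \<delta> I' Se u w z I' = 0"
  proof -
    have "(\<Sum>i\<in>{1..<n}. u i * SD \<delta> Se u w I' i) = 0" by (rule sum.neutral) (auto simp: Sd0)
    moreover have "Yf u = 0" using Id0 I' by simp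
    ultimately show ?thesis unfolding Vd_def using Sd0[OF n1 order_refl] z0 by simp
  qed
  hence "(c0/2) * Qf u w z \<le> 0" using c by linarith
  hence Q0: "QQ S' I' \<le> 0" unfolding QQ_def u_def w_def z_def using consts_pos
    by (simp add: mult_le_0_iff)
  show ?thesis
  proof (intro conjI allI impI)
    have "(I' - Ie)^2 \<le> 0" using dev_bounds(2)[of I' S'] Q0 by linarith
    thus "I' = Ie" by simp
  next
    fix i assume "i \<le> n"
    have "(S' i - Se i)^2 \<le> 5 * real n * QQ S' I'" by (rule dev_bounds(1)[OF \<open>i \<le> n\<close>])
    also have "\<dots> \<le> 0" using Q0 n1 by (simp add: mult_nonneg_nonpos)
    finally show "S' i = Se i" by simp
  qed
qed

end

context wm begin

primrec cc :: "real \<Rightarrow> real \<Rightarrow> nat \<Rightarrow> real" where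
  "cc \<delta> I 0 = 1"
| "cc \<delta> I (Suc i) = cc \<delta> I i * ((1 - p i)*\<delta>) / (p (Suc i)*\<omega> + (1 - p (Suc i))*\<delta> + \<mu> + \<beta> (Suc i)*I)"

definition "an I = p n*\<omega> + \<mu> + \<beta> n*I"
definition "DD \<delta> I = (\<Sum>i<n. cc \<delta> I i) + (1 - p (n-1))*\<delta>*cc \<delta> I (n-1)/an I"
definition "zs I = 1 - I - \<mu>/an I"
definition "xsv \<delta> I = zs I/DD \<delta> I"
definition "SS \<delta> I i = (if i < n then cc \<delta> I i * xsv \<delta> I else (\<mu> + (1 - p (n-1))*\<delta>*cc \<delta> I (n-1) * xsv \<delta> I)/an I)"
definition "FF \<delta> I = (\<Sum>i=0..n. \<beta> i * SS \<delta> I i) - (r + \<mu>)"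
definition "F0 I = \<beta> 0 * zs I + \<beta> n * \<mu>/an I - (r + \<mu>)"

lemma den_ge:
  assumes "i \<le> n" "0 \<le> \<delta>" "0 \<le> I"
  shows "\<mu> \<le> p i*\<omega> + (1 - p i)*\<delta> + \<mu> + \<beta> i*I"
proof -
  have "0 \<le> p i" "p i \<le> 1" using p_range assms by auto
  moreover have "0 \<le> \<beta> i" using beta_range[of i] b0 assms by auto
  ultimately have "0 \<le> p i*\<omega>" "0 \<le> (1 - p i)*\<delta>" "0 \<le> \<beta> i*I" using om assms by auto
  thus ?thesis by linarith
qed

lemma cc_bounds:
  assumes d: "0 \<le> \<delta>" "\<delta> \<le> \<mu>/2" and I: "0 \<le> I"
  shows "i \<le> n \<Longrightarrow> 0 \<le> cc \<delta> I i \<and> cc \<delta> I i \<le> 1 \<and> (1 \<le> i \<longrightarrow> cc \<delta> I i \<le> \<delta>/\<mu>)"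
proof (induction i)
  case 0 then show ?case by simp
next
  case (Suc i)
  then have IH: "0 \<le> cc \<delta> I i" "cc \<delta> I i \<le> 1" by auto
  define den where "den = p (Suc i)*\<omega> + (1 - p (Suc i))*\<delta> + \<mu> + \<beta> (Suc i)*I"
  have den: "\<mu> \<le> den" unfolding den_def by (rule den_ge) (use Suc d I in auto)
  have pi: "0 \<le> p i" "p i \<le> 1" using p_range Suc by auto
  have a: "0 \<le> (1 - p i)*\<delta>" "(1 - p i)*\<delta> \<le> \<delta>" using pi d by (auto simp: mult_left_le_one_le)
  have q: "(1 - p i)*\<delta>/den \<le> \<delta>/\<mu>" by (rule frac_le) (use a den mu d in auto)
  have q0: "0 \<le> (1 - p i)*\<delta>/den" using a den mu by simp
  have e: "cc \<delta> I (Suc i) = cc \<delta> I i * ((1 - p i)*\<delta>/den)" unfolding den_def by simp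
  have "cc \<delta> I (Suc i) \<le> 1 * (\<delta>/\<mu>)" unfolding e using IH q q0 by (intro mult_mono) auto
  moreover have "\<delta>/\<mu> \<le> 1" using d mu by simp
  moreover have "0 \<le> cc \<delta> I (Suc i)" unfolding e using mult_nonneg_nonneg[OF IH(1) q0] .
  ultimately show ?case by simp
qed

lemma an_bounds: "0 \<le> I \<Longrightarrow> I \<le> 1 \<Longrightarrow> \<mu> \<le> an I \<and> an I \<le> p n*\<omega> + \<mu> + \<beta> n"
  unfolding an_def using pn om bnpos by (auto simp: mult_left_le)

lemma DD_bounds:
  assumes d: "0 \<le> \<delta>" "\<delta> \<le> \<mu>/2" and I: "0 \<le> I" "I \<le> 1"
  shows "1 \<le> DD \<delta> I" "DD \<delta> I \<le> 1 + real n * \<delta>/\<mu>"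
proof -
  have cb: "\<And>i. i \<le> n \<Longrightarrow> 0 \<le> cc \<delta> I i \<and> cc \<delta> I i \<le> 1 \<and> (1 \<le> i \<longrightarrow> cc \<delta> I i \<le> \<delta>/\<mu>)"
    using cc_bounds[OF d I(1)] by blast
  have an: "\<mu> \<le> an I" using an_bounds I by blast
  have split: "(\<Sum>i<n. cc \<delta> I i) = 1 + (\<Sum>i\<in>{1..<n}. cc \<delta> I i)"
  proof -
    have "{..<n} = insert 0 {1..<n}" using n1 by auto
    thus ?thesis by simp
  qed
  have mid0: "0 \<le> (\<Sum>i\<in>{1..<n}. cc \<delta> I i)" using cb by (intro sum_nonneg) auto
  have midle: "(\<Sum>i\<in>{1..<n}. cc \<delta> I i) \<le> of_nat (card {1..<n}) * (\<delta>/\<mu>)"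
    by (rule sum_bounded_above) (use cb in auto)
  have pn1: "0 \<le> p (n-1)" "p (n-1) \<le> 1" using p_range[of "n-1"] by auto
  define t where "t = (1 - p (n-1))*\<delta>*cc \<delta> I (n-1)/an I"
  have t0: "0 \<le> t" unfolding t_def using pn1 d cb[of "n-1"] an mu by auto
  have tle: "t \<le> \<delta>/\<mu>"
  proof -
    have "(1 - p (n-1))*\<delta>*cc \<delta> I (n-1) \<le> \<delta>*1"
      using pn1 d cb[of "n-1"] by (intro mult_mono) (auto simp: mult_left_le_one_le)
    thus ?thesis unfolding t_def using an mu d pn1 cb[of "n-1"] by (intro frac_le) auto
  qed
  have D: "DD \<delta> I = 1 + (\<Sum>i\<in>{1..<n}. cc \<delta> I i) + t" unfolding DD_def t_def split by simp
  show "1 \<le> DD \<delta> I" using D mid0 t0 by linarith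
  have "of_nat (card {1..<n}) * (\<delta>/\<mu>) = (real n - 1) * (\<delta>/\<mu>)" using n1 by (simp add: of_nat_diff)
  hence "(\<Sum>i\<in>{1..<n}. cc \<delta> I i) + t \<le> real n * (\<delta>/\<mu>)" using midle tle by (simp add: algebra_simps)
  thus "DD \<delta> I \<le> 1 + real n * \<delta>/\<mu>" using D by simp
qed


lemma sum3_le: "(x::real) \<le> a + b + c \<Longrightarrow> a \<le> K \<Longrightarrow> b \<le> K \<Longrightarrow> c \<le> K \<Longrightarrow> x \<le> 3*K"
  by linarith

lemma abs3: "\<bar>(a::real) + b + c\<bar> \<le> \<bar>a\<bar> + \<bar>b\<bar> + \<bar>c\<bar>"
  by (smt (verit) abs_triangle_ineq)

lemma cc_cont:
  assumes d: "0 \<le> \<delta>"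
  shows "i \<le> n \<Longrightarrow> continuous_on {0..1} (\<lambda>I. cc \<delta> I i)"
proof (induction i)
  case 0 then show ?case by simp
next
  case (Suc i)
  have IH: "continuous_on {0..1} (\<lambda>I. cc \<delta> I i)" using Suc by auto
  have nz: "\<forall>I\<in>{0..1}. p (Suc i)*\<omega> + (1 - p (Suc i))*\<delta> + \<mu> + \<beta> (Suc i)*I \<noteq> 0"
  proof
    fix I :: real assume "I \<in> {0..1}"
    hence "\<mu> \<le> p (Suc i)*\<omega> + (1 - p (Suc i))*\<delta> + \<mu> + \<beta> (Suc i)*I"
      using Suc d by (intro den_ge) auto
    thus "p (Suc i)*\<omega> + (1 - p (Suc i))*\<delta> + \<mu> + \<beta> (Suc i)*I \<noteq> 0" using mu by linarith
  qed
  have "continuous_on {0..1} (\<lambda>I. cc \<delta> I i * ((1 - p i)*\<delta>) / (p (Suc i)*\<omega> + (1 - p (Suc i))*\<delta> + \<mu> + \<beta> (Suc i)*I))"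
    by (intro continuous_on_divide continuous_on_mult IH continuous_on_const continuous_on_add continuous_on_id nz)
  then show ?case by simp
qed

lemma FF_cont:
  assumes d: "0 \<le> \<delta>" "\<delta> \<le> \<mu>/2"
  shows "continuous_on {0..1} (FF \<delta>)"
proof -
  have an_c: "continuous_on {0..1} an" unfolding an_def by (intro continuous_intros)
  have an_nz: "\<forall>I\<in>{0..1}. an I \<noteq> 0" using an_bounds mu by force
  have DD_c: "continuous_on {0..1} (DD \<delta>)" unfolding DD_def[abs_def]
    by (intro continuous_on_add continuous_on_sum continuous_on_divide continuous_on_mult continuous_on_const
        cc_cont[OF d(1)] an_c an_nz) auto
  have DD_nz: "\<forall>I\<in>{0..1}. DD \<delta> I \<noteq> 0" using DD_bounds(1)[OF d] by force
  have zs_c: "continuous_on {0..1} zs" unfolding zs_def[abs_def]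
    by (intro continuous_on_diff continuous_on_divide continuous_on_const continuous_on_id an_c an_nz)
  have sv_c: "continuous_on {0..1} (xsv \<delta>)" unfolding xsv_def[abs_def]
    by (intro continuous_on_divide zs_c DD_c DD_nz)
  have SS_c: "continuous_on {0..1} (\<lambda>I. SS \<delta> I i)" if "i \<le> n" for i
  proof (cases "i < n")
    case True
    then show ?thesis unfolding SS_def using that
      by (simp, intro continuous_on_mult cc_cont[OF d(1)] sv_c) auto
  next
    case False
    then show ?thesis unfolding SS_def
      by (simp, intro continuous_on_divide continuous_on_add continuous_on_mult continuous_on_const
          cc_cont[OF d(1)] sv_c an_c an_nz) auto
  qed
  show ?thesis unfolding FF_def[abs_def]
    by (intro continuous_on_diff continuous_on_sum continuous_on_mult continuous_on_const SS_c) auto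
qed

lemma zs_bound: "0 \<le> I \<Longrightarrow> I \<le> 1 \<Longrightarrow> \<bar>zs I\<bar> \<le> 1"
proof -
  assume I: "0 \<le> I" "I \<le> 1"
  have an: "\<mu> \<le> an I" using an_bounds I by blast
  have "0 < \<mu>/an I" "\<mu>/an I \<le> 1" using an mu by auto
  thus ?thesis unfolding zs_def using I by auto
qed

lemma FF_close:
  assumes d: "0 \<le> \<delta>" "\<delta> \<le> \<mu>/2" and I: "0 \<le> I" "I \<le> 1"
  shows "\<bar>FF \<delta> I - F0 I\<bar> \<le> 3*real n*\<beta> n*\<delta>/\<mu>"
proof -
  note cb = cc_bounds[OF d I(1)]
  have an: "\<mu> \<le> an I" using an_bounds I by blast
  have anp: "an I > 0" using an mu by linarith
  have D1: "1 \<le> DD \<delta> I" and D2: "DD \<delta> I \<le> 1 + real n * \<delta>/\<mu>" using DD_bounds[OF d I] by auto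
  have zb: "\<bar>zs I\<bar> \<le> 1" by (rule zs_bound[OF I])
  have svb: "\<bar>xsv \<delta> I\<bar> \<le> 1"
  proof -
    have "\<bar>xsv \<delta> I\<bar> = \<bar>zs I\<bar> / DD \<delta> I" unfolding xsv_def using D1 by simp
    also have "\<dots> \<le> 1" using zb D1 by (simp add: divide_le_eq)
    finally show ?thesis .
  qed
  have svz: "\<bar>xsv \<delta> I - zs I\<bar> \<le> real n * \<delta>/\<mu>"
  proof -
    have "xsv \<delta> I - zs I = zs I * (1 - DD \<delta> I) / DD \<delta> I" unfolding xsv_def using D1 by (simp add: field_simps)
    hence "\<bar>xsv \<delta> I - zs I\<bar> = \<bar>zs I\<bar> * (DD \<delta> I - 1) / DD \<delta> I" using D1 by (simp add: abs_mult)
    also have "\<dots> \<le> 1 * (DD \<delta> I - 1) / 1" using zb D1 by (intro frac_le mult_mono) auto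
    also have "\<dots> \<le> real n * \<delta>/\<mu>" using D2 by simp
    finally show ?thesis .
  qed
  define t where "t = (1 - p (n-1))*\<delta>*cc \<delta> I (n-1) * xsv \<delta> I"
  have pn1: "0 \<le> p (n-1)" "p (n-1) \<le> 1" using p_range[of "n-1"] by auto
  have tb: "\<bar>t\<bar> \<le> \<delta>"
  proof -
    have "\<bar>t\<bar> = ((1 - p (n-1))*\<delta>)*(\<bar>cc \<delta> I (n-1)\<bar> * \<bar>xsv \<delta> I\<bar>)" unfolding t_def using pn1 d
      by (simp add: abs_mult)
    also have "\<dots> \<le> \<delta> * (1*1)"
      using pn1 d cb[of "n-1"] svb by (intro mult_mono) (auto simp: mult_left_le_one_le)
    finally show ?thesis by simp
  qed
  have SSn: "SS \<delta> I n = (\<mu> + t)/an I" unfolding SS_def t_def by simp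
  have SS0: "SS \<delta> I 0 = xsv \<delta> I" unfolding SS_def using n1 by simp
  have SSm: "SS \<delta> I i = cc \<delta> I i * xsv \<delta> I" if "i \<in> {1..<n}" for i unfolding SS_def using that by simp
  have eqX: "FF \<delta> I - F0 I = \<beta> 0 * (xsv \<delta> I - zs I) + (\<Sum>i\<in>{1..<n}. \<beta> i * (cc \<delta> I i * xsv \<delta> I)) + \<beta> n * (t / an I)"
  proof -
    have "(\<Sum>i=0..n. \<beta> i * SS \<delta> I i) = \<beta> 0 * SS \<delta> I 0 + (\<Sum>i\<in>{1..<n}. \<beta> i * SS \<delta> I i) + \<beta> n * SS \<delta> I n"
      by (rule sum_split_n)
    moreover have "(\<Sum>i\<in>{1..<n}. \<beta> i * SS \<delta> I i) = (\<Sum>i\<in>{1..<n}. \<beta> i * (cc \<delta> I i * xsv \<delta> I))"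
      by (rule sum.cong) (auto simp: SSm)
    ultimately show ?thesis unfolding FF_def F0_def SSn SS0 using anp by (simp add: field_simps)
  qed
  have "\<bar>FF \<delta> I - F0 I\<bar> \<le> \<bar>\<beta> 0 * (xsv \<delta> I - zs I)\<bar> + \<bar>\<Sum>i\<in>{1..<n}. \<beta> i * (cc \<delta> I i * xsv \<delta> I)\<bar> + \<bar>\<beta> n * (t / an I)\<bar>"
    unfolding eqX by (rule abs3)
  moreover have "\<bar>\<beta> 0 * (xsv \<delta> I - zs I)\<bar> \<le> \<beta> n * (real n * \<delta>/\<mu>)"
  proof -
    have "\<bar>\<beta> 0 * (xsv \<delta> I - zs I)\<bar> = \<beta> 0 * \<bar>xsv \<delta> I - zs I\<bar>" using b0 by (simp add: abs_mult)
    also have "\<dots> \<le> \<beta> n * (real n * \<delta>/\<mu>)" using b0 bn svz by (intro mult_mono) auto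
    finally show ?thesis .
  qed
  moreover have "\<bar>\<Sum>i\<in>{1..<n}. \<beta> i * (cc \<delta> I i * xsv \<delta> I)\<bar> \<le> \<beta> n * (real n * \<delta>/\<mu>)"
  proof -
    have "\<bar>\<Sum>i\<in>{1..<n}. \<beta> i * (cc \<delta> I i * xsv \<delta> I)\<bar> \<le> (\<Sum>i\<in>{1..<n}. \<bar>\<beta> i * (cc \<delta> I i * xsv \<delta> I)\<bar>)"
      by (rule sum_abs)
    also have "\<dots> \<le> of_nat (card {1..<n}) * (\<beta> n * (\<delta>/\<mu>))"
    proof (rule sum_bounded_above)
      fix i assume i: "i \<in> {1..<n}"
      have bi: "0 \<le> \<beta> i" "\<beta> i \<le> \<beta> n" using beta_range[of i] b0 i by auto
      have ci: "0 \<le> cc \<delta> I i" "cc \<delta> I i \<le> \<delta>/\<mu>" using cb[of i] i by auto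
      have "\<bar>\<beta> i * (cc \<delta> I i * xsv \<delta> I)\<bar> = \<beta> i * (cc \<delta> I i * \<bar>xsv \<delta> I\<bar>)" using bi ci by (simp add: abs_mult)
      also have "\<dots> \<le> \<beta> n * ((\<delta>/\<mu>) * 1)" using bi ci svb by (intro mult_mono) auto
      finally show "\<bar>\<beta> i * (cc \<delta> I i * xsv \<delta> I)\<bar> \<le> \<beta> n * (\<delta>/\<mu>)" by simp
    qed
    also have "\<dots> \<le> \<beta> n * (real n * \<delta>/\<mu>)"
    proof -
      have "of_nat (card {1..<n}) \<le> real n" by simp
      hence "of_nat (card {1..<n}) * (\<beta> n * (\<delta>/\<mu>)) \<le> real n * (\<beta> n * (\<delta>/\<mu>))"
        using bnpos d mu by (intro mult_right_mono) auto
      thus ?thesis by (simp add: algebra_simps)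
    qed
    finally show ?thesis .
  qed
  moreover have "\<bar>\<beta> n * (t / an I)\<bar> \<le> \<beta> n * (real n * \<delta>/\<mu>)"
  proof -
    have "\<bar>t / an I\<bar> \<le> \<delta>/\<mu>" using tb anp an mu d by (simp add: abs_divide) (intro frac_le, auto)
    also have "\<dots> \<le> real n * \<delta>/\<mu>"
    proof -
      have "1 * \<delta> \<le> real n * \<delta>" using n1 d by (intro mult_right_mono) auto
      thus ?thesis using mu by (simp add: divide_right_mono)
    qed
    finally have "\<bar>t / an I\<bar> \<le> real n * \<delta>/\<mu>" .
    hence "\<beta> n * \<bar>t / an I\<bar> \<le> \<beta> n * (real n * \<delta>/\<mu>)" using bnpos by (intro mult_left_mono) auto
    moreover have "\<bar>\<beta> n * (t / an I)\<bar> = \<beta> n * \<bar>t / an I\<bar>" using bnpos by (simp only: abs_mult)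
    ultimately show ?thesis by linarith
  qed
  ultimately have "\<bar>FF \<delta> I - F0 I\<bar> \<le> 3 * (\<beta> n * (real n * \<delta>/\<mu>))" by (rule sum3_le)
  thus ?thesis by (simp add: algebra_simps)
qed

lemma F0_0: "F0 0 > 0"
proof -
  have pw: "0 \<le> p n*\<omega>" using pn om by simp
  define A where "A = p n*\<omega> + \<mu>"
  have Ap: "A > 0" unfolding A_def using pw mu by linarith
  have x: "\<mu>/A * A = \<mu>" using Ap by simp
  have an0: "an 0 = A" unfolding an_def A_def by simp
  have "F0 0 * A = \<beta> 0*A - \<beta> 0*(\<mu>/A*A) + \<beta> n*(\<mu>/A*A) - (r+\<mu>)*A"
    unfolding F0_def zs_def an0 by (simp add: algebra_simps)
  also have "\<dots> = \<beta> 0*A - \<beta> 0*\<mu> + \<beta> n*\<mu> - (r+\<mu>)*A" unfolding x ..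
  also have "\<dots> = \<beta> 0 * (p n * \<omega>) + \<beta> n * \<mu> - (p n * \<omega> + \<mu>) * (\<mu> + r)"
    unfolding A_def by (simp add: algebra_simps)
  finally have "F0 0 * A > 0" using cond by simp
  thus ?thesis using Ap by (simp add: zero_less_mult_iff)
qed

lemma F0_1: "F0 1 \<le> -r"
proof -
  have an: "an 1 = p n*\<omega> + \<mu> + \<beta> n" unfolding an_def by simp
  have anp: "an 1 > 0" using an_bounds[of 1] mu by simp
  have pw: "0 \<le> p n*\<omega>" using pn om by simp
  have "\<beta> n - \<beta> 0 \<le> an 1" unfolding an using pw mu b0 by linarith
  hence "(\<beta> n - \<beta> 0) * \<mu> \<le> \<mu> * an 1" using mu by (simp add: mult.commute mult_left_mono)
  hence "(\<beta> n - \<beta> 0) * \<mu> / an 1 \<le> \<mu>" by (simp only: pos_divide_le_eq[OF anp])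
  moreover have "F0 1 = (\<beta> n - \<beta> 0) * \<mu> / an 1 - r - \<mu>" unfolding F0_def zs_def
    by (simp add: diff_divide_distrib algebra_simps)
  ultimately show ?thesis by linarith
qed


lemma SS_eq:
  assumes d: "0 \<le> \<delta>" "\<delta> \<le> \<mu>/2" and I: "0 < I" "I \<le> 1" and F: "FF \<delta> I = 0"
  shows "endemic_eq n \<delta> \<omega> r \<mu> p \<beta> (SS \<delta> I) I"
proof -
  define Se where "Se = SS \<delta> I"
  have I0: "0 \<le> I" using I by simp
  have an: "\<mu> \<le> an I" using an_bounds I0 I(2) by blast
  have anp: "an I \<noteq> 0" using an mu by linarith
  have D1: "1 \<le> DD \<delta> I" using DD_bounds[OF d I0 I(2)] by simp
  have norm: "(\<Sum>i=0..n. Se i) + I = 1"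
  proof -
    have "(\<Sum>i=0..n. Se i) = (\<Sum>i<n. Se i) + Se n"
      by (simp add: atLeast0AtMost lessThan_Suc_atMost[symmetric])
    also have "(\<Sum>i<n. Se i) = (\<Sum>i<n. cc \<delta> I i) * xsv \<delta> I"
      unfolding Se_def SS_def sum_distrib_right by (rule sum.cong) auto
    finally have "(\<Sum>i=0..n. Se i) = (\<Sum>i<n. cc \<delta> I i) * xsv \<delta> I + (\<mu> + (1 - p (n-1))*\<delta>*cc \<delta> I (n-1) * xsv \<delta> I)/an I"
      unfolding Se_def SS_def by simp
    also have "\<dots> = DD \<delta> I * xsv \<delta> I + \<mu>/an I"
      unfolding DD_def using anp by (simp add: field_simps)
    also have "\<dots> = zs I + \<mu>/an I" unfolding xsv_def using D1 by simp
    finally show ?thesis unfolding zs_def by simp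
  qed
  have mid: "Sdot n \<delta> \<omega> r \<mu> p \<beta> Se I i = 0" if i: "1 \<le> i" "i < n" for i
  proof -
    obtain j where j: "i = Suc j" using i by (cases i) auto
    define den where "den = p i*\<omega> + (1 - p i)*\<delta> + \<mu> + \<beta> i*I"
    have den: "\<mu> \<le> den" unfolding den_def by (rule den_ge) (use i d I0 in auto)
    have dnz: "den \<noteq> 0" using den mu by linarith
    have cci: "cc \<delta> I i * den = cc \<delta> I (i-1) * ((1 - p (i-1))*\<delta>)"
    proof -
      have "cc \<delta> I i = cc \<delta> I j * ((1 - p j)*\<delta>) / den" unfolding j den_def by simp
      hence "cc \<delta> I i * den = cc \<delta> I j * ((1 - p j)*\<delta>)" using dnz by (simp del: cc.simps)
      thus ?thesis using j by (simp del: cc.simps)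
    qed
    have im: "i - 1 < n" using i by simp
    have "Sdot n \<delta> \<omega> r \<mu> p \<beta> Se I i = ((1 - p (i-1))*\<delta>) * cc \<delta> I (i-1) * xsv \<delta> I - (cc \<delta> I i * den) * xsv \<delta> I"
      unfolding Sdot_def Se_def SS_def den_def using i im by (simp add: algebra_simps del: cc.simps)
    also have "\<dots> = 0" unfolding cci by simp
    finally show ?thesis .
  qed
  have last: "Sdot n \<delta> \<omega> r \<mu> p \<beta> Se I n = 0"
  proof -
    have n1': "n - 1 < n" using n1 by simp
    have "Se n * an I = \<mu> + (1 - p (n-1))*\<delta>*cc \<delta> I (n-1) * xsv \<delta> I"
      unfolding Se_def SS_def using anp by simp
    moreover have "Se (n-1) = cc \<delta> I (n-1) * xsv \<delta> I" unfolding Se_def SS_def using n1' by simp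
    moreover have "Sdot n \<delta> \<omega> r \<mu> p \<beta> Se I n = \<mu> - Se n * an I + ((1 - p (n - 1)) * \<delta>) * Se (n - 1)"
      unfolding Sdot_def an_def using n1 by (simp add: algebra_simps)
    ultimately show ?thesis by (simp add: algebra_simps)
  qed
  have Id: "Idot n r \<mu> \<beta> Se I = 0"
  proof -
    have "Idot n r \<mu> \<beta> Se I = I * FF \<delta> I" unfolding Idot_def FF_def Se_def by (simp add: algebra_simps)
    thus ?thesis using F by simp
  qed
  have first: "Sdot n \<delta> \<omega> r \<mu> p \<beta> Se I 0 = 0"
  proof -
    have "(\<Sum>i=0..n. Sdot n \<delta> \<omega> r \<mu> p \<beta> Se I i) + Idot n r \<mu> \<beta> Se I = \<mu> - \<mu> * ((\<Sum>i=0..n. Se i) + I)"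
      using sum_dot[where n=n and p=p] n1 p0 by blast
    hence "(\<Sum>i=0..n. Sdot n \<delta> \<omega> r \<mu> p \<beta> Se I i) = 0" using norm Id by simp
    moreover have "(\<Sum>i=0..n. Sdot n \<delta> \<omega> r \<mu> p \<beta> Se I i) = Sdot n \<delta> \<omega> r \<mu> p \<beta> Se I 0
        + (\<Sum>i\<in>{1..<n}. Sdot n \<delta> \<omega> r \<mu> p \<beta> Se I i) + Sdot n \<delta> \<omega> r \<mu> p \<beta> Se I n"
      by (rule sum_split_n)
    moreover have "(\<Sum>i\<in>{1..<n}. Sdot n \<delta> \<omega> r \<mu> p \<beta> Se I i) = 0" by (rule sum.neutral) (auto intro: mid)
    ultimately show ?thesis using last by simp
  qed
  have "\<forall>i\<le>n. Sdot n \<delta> \<omega> r \<mu> p \<beta> Se I i = 0"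
  proof (intro allI impI)
    fix i assume "i \<le> n"
    then consider "i = 0" | "1 \<le> i \<and> i < n" | "i = n" by linarith
    then show "Sdot n \<delta> \<omega> r \<mu> p \<beta> Se I i = 0" using first mid last by cases auto
  qed
  then show ?thesis unfolding endemic_eq_def is_equilibrium_def Se_def[symmetric]
    using Id norm I by simp
qed

lemma SS_bounds:
  assumes d: "0 \<le> \<delta>" "\<delta> \<le> \<mu>/2" and I: "0 \<le> I" "I \<le> 1"
  shows "slow \<le> SS \<delta> I n" "SS \<delta> I n \<le> 2" "\<forall>i\<in>{1..<n}. \<bar>SS \<delta> I i\<bar> \<le> \<delta>/\<mu>"
proof -
  note cb = cc_bounds[OF d I(1)]
  have an: "\<mu> \<le> an I" "an I \<le> p n*\<omega> + \<mu> + \<beta> n" using an_bounds I by auto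
  have D1: "1 \<le> DD \<delta> I" using DD_bounds[OF d I] by simp
  have svb: "\<bar>xsv \<delta> I\<bar> \<le> 1"
  proof -
    have "\<bar>xsv \<delta> I\<bar> = \<bar>zs I\<bar> / DD \<delta> I" unfolding xsv_def using D1 by simp
    also have "\<dots> \<le> 1" using zs_bound[OF I] D1 by (simp add: divide_le_eq)
    finally show ?thesis .
  qed
  define t where "t = (1 - p (n-1))*\<delta>*cc \<delta> I (n-1) * xsv \<delta> I"
  have pn1: "0 \<le> p (n-1)" "p (n-1) \<le> 1" using p_range[of "n-1"] by auto
  have tb: "\<bar>t\<bar> \<le> \<delta>"
  proof -
    have "\<bar>t\<bar> = ((1 - p (n-1))*\<delta>)*(\<bar>cc \<delta> I (n-1)\<bar> * \<bar>xsv \<delta> I\<bar>)" unfolding t_def using pn1 d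
      by (simp add: abs_mult)
    also have "\<dots> \<le> \<delta> * (1*1)"
      using pn1 d cb[of "n-1"] svb by (intro mult_mono) (auto simp: mult_left_le_one_le)
    finally show ?thesis by simp
  qed
  have SSn: "SS \<delta> I n = (\<mu> + t)/an I" unfolding SS_def t_def by simp
  have anp: "an I > 0" using an mu by linarith
  show "slow \<le> SS \<delta> I n"
  proof -
    have "\<mu>/2 \<le> \<mu> + t" using tb d by linarith
    have "slow = (\<mu>/2)/(p n*\<omega> + \<mu> + \<beta> n)" unfolding slow_def by simp
    also have "\<dots> \<le> (\<mu> + t)/an I" using \<open>\<mu>/2 \<le> \<mu> + t\<close> an anp mu by (intro frac_le) auto
    finally show ?thesis unfolding SSn .
  qed
  show "SS \<delta> I n \<le> 2"
  proof -
    have "(\<mu> + t)/an I \<le> (2*\<mu>)/\<mu>" using tb d an anp mu by (intro frac_le) auto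
    thus ?thesis unfolding SSn using mu by simp
  qed
  show "\<forall>i\<in>{1..<n}. \<bar>SS \<delta> I i\<bar> \<le> \<delta>/\<mu>"
  proof
    fix i assume i: "i \<in> {1..<n}"
    have "\<bar>SS \<delta> I i\<bar> = \<bar>cc \<delta> I i\<bar> * \<bar>xsv \<delta> I\<bar>" unfolding SS_def using i by (simp add: abs_mult)
    also have "\<dots> \<le> (\<delta>/\<mu>) * 1" using cb[of i] i svb by (intro mult_mono) auto
    finally show "\<bar>SS \<delta> I i\<bar> \<le> \<delta>/\<mu>" by simp
  qed
qed

lemma existence:
  assumes d: "0 \<le> \<delta>" "\<delta> \<le> \<mu>/2" and small: "3*real n*\<beta> n*\<delta>/\<mu> < min (F0 0) r"
  shows "\<exists>I. 0 < I \<and> I < 1 \<and> FF \<delta> I = 0"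
proof -
  have a: "FF \<delta> 0 > 0"
  proof -
    have "\<bar>FF \<delta> 0 - F0 0\<bar> \<le> 3*real n*\<beta> n*\<delta>/\<mu>" by (rule FF_close[OF d]) auto
    thus ?thesis using small by linarith
  qed
  have b: "FF \<delta> 1 < 0"
  proof -
    have "\<bar>FF \<delta> 1 - F0 1\<bar> \<le> 3*real n*\<beta> n*\<delta>/\<mu>" by (rule FF_close[OF d]) auto
    thus ?thesis using small F0_1 by linarith
  qed
  obtain x where x: "0 \<le> x" "x \<le> 1" "FF \<delta> x = 0"
    using IVT2'[of "FF \<delta>" 1 0 0, OF _ _ _ FF_cont[OF d]] a b by auto
  have "x \<noteq> 0" using a x by auto
  moreover have "x \<noteq> 1" using b x by auto
  ultimately show ?thesis using x by (intro exI[of _ x]) auto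
qed

end

theorem theorem4:
  fixes n :: nat and \<omega> r \<mu> :: real and p \<beta> :: "nat \<Rightarrow> real"
  assumes "n \<ge> 1" and "\<omega> \<ge> 0" and "r > 0" and "\<mu> > 0"
    and "p 0 = 0" and "\<forall>i\<in>{1..n}. 0 \<le> p i \<and> p i \<le> 1"
    and "0 \<le> \<beta> 0" and "\<forall>i<n. \<beta> i \<le> \<beta> (Suc i)" and "\<beta> 0 < \<beta> n"
    and "(p n * \<omega> + \<mu>) * (\<mu> + r) < \<beta> 0 * (p n * \<omega>) + \<beta> n * \<mu>"
  shows "\<exists>\<delta>0>0. \<forall>\<delta>. 0 \<le> \<delta> \<and> \<delta> < \<delta>0 \<longrightarrow>
           (\<exists>S I. endemic_eq n \<delta> \<omega> r \<mu> p \<beta> S I \<and>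
              (\<forall>S' I'. endemic_eq n \<delta> \<omega> r \<mu> p \<beta> S' I' \<longrightarrow> I' = I \<and> (\<forall>i\<le>n. S' i = S i))) \<and>
           (\<forall>S I. endemic_eq n \<delta> \<omega> r \<mu> p \<beta> S I \<longrightarrow> loc_asymp_stable n \<delta> \<omega> r \<mu> p \<beta> S I)"
proof -
  have W: "wm n \<omega> r \<mu> p \<beta>" unfolding wm_def using assms by auto
  interpret wm n \<omega> r \<mu> p \<beta> by (rule W)
  define m where "m = min (F0 0) r"
  have mp: "m > 0" unfolding m_def using F0_0 rpos by simp
  have Kp: "3 * real n * \<beta> n > 0" using n1 bnpos by simp
  define \<delta>0 where "\<delta>0 = min (min dc (\<mu>/2)) (\<mu> * m / (3 * real n * \<beta> n))"
  have \<delta>0p: "\<delta>0 > 0" unfolding \<delta>0_def using consts_pos mu mp Kp by simp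
  show ?thesis
  proof (intro exI[of _ \<delta>0] conjI allI impI)
    show "\<delta>0 > 0" by (rule \<delta>0p)
  next
    fix \<delta> assume d: "0 \<le> \<delta> \<and> \<delta> < \<delta>0"
    have d1: "0 \<le> \<delta>" "\<delta> \<le> dc" "\<delta> \<le> \<mu>/2" using d unfolding \<delta>0_def by auto
    have "\<delta> < \<mu> * m / (3 * real n * \<beta> n)" using d unfolding \<delta>0_def by auto
    hence "\<delta> * (3 * real n * \<beta> n) < \<mu> * m" using Kp by (simp add: less_divide_eq)
    hence small: "3*real n*\<beta> n*\<delta>/\<mu> < min (F0 0) r" unfolding m_def[symmetric] using mu
      by (simp add: divide_less_eq algebra_simps)
    obtain Ie where Ie: "0 < Ie" "Ie < 1" "FF \<delta> Ie = 0" using existence[OF d1(1) d1(3) small] by blast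
    define Se where "Se = SS \<delta> Ie"
    have eq: "endemic_eq n \<delta> \<omega> r \<mu> p \<beta> Se Ie" unfolding Se_def by (rule SS_eq) (use d1 Ie in auto)
    have bd: "slow \<le> Se n" "Se n \<le> 2" "\<forall>i\<in>{1..<n}. \<bar>Se i\<bar> \<le> \<delta>/\<mu>"
      unfolding Se_def using SS_bounds[OF d1(1) d1(3)] Ie by auto
    have WE: "wm_eq n \<omega> r \<mu> p \<beta> \<delta> Se Ie"
      unfolding wm_eq_def wm_eq_axioms_def using W eq d1 bd by auto
    show "\<exists>S I. endemic_eq n \<delta> \<omega> r \<mu> p \<beta> S I \<and>
              (\<forall>S' I'. endemic_eq n \<delta> \<omega> r \<mu> p \<beta> S' I' \<longrightarrow> I' = I \<and> (\<forall>i\<le>n. S' i = S i))"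
      using eq wm_eq.unique[OF WE] by blast
  next
    fix \<delta> assume d: "0 \<le> \<delta> \<and> \<delta> < \<delta>0"
    have d1: "0 \<le> \<delta>" "\<delta> \<le> dc" "\<delta> \<le> \<mu>/2" using d unfolding \<delta>0_def by auto
    have "\<delta> < \<mu> * m / (3 * real n * \<beta> n)" using d unfolding \<delta>0_def by auto
    hence "\<delta> * (3 * real n * \<beta> n) < \<mu> * m" using Kp by (simp add: less_divide_eq)
    hence small: "3*real n*\<beta> n*\<delta>/\<mu> < min (F0 0) r" unfolding m_def[symmetric] using mu
      by (simp add: divide_less_eq algebra_simps)
    obtain Ie where Ie: "0 < Ie" "Ie < 1" "FF \<delta> Ie = 0" using existence[OF d1(1) d1(3) small] by blast
    define Se where "Se = SS \<delta> Ie"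
    have eq: "endemic_eq n \<delta> \<omega> r \<mu> p \<beta> Se Ie" unfolding Se_def by (rule SS_eq) (use d1 Ie in auto)
    have bd: "slow \<le> Se n" "Se n \<le> 2" "\<forall>i\<in>{1..<n}. \<bar>Se i\<bar> \<le> \<delta>/\<mu>"
      unfolding Se_def using SS_bounds[OF d1(1) d1(3)] Ie by auto
    have WE: "wm_eq n \<omega> r \<mu> p \<beta> \<delta> Se Ie"
      unfolding wm_eq_def wm_eq_axioms_def using W eq d1 bd by auto
    fix S I assume eq': "endemic_eq n \<delta> \<omega> r \<mu> p \<beta> S I"
    have same: "I = Ie" "\<forall>i\<le>n. S i = Se i" using wm_eq.unique[OF WE eq'] by auto
    have bd': "slow \<le> S n" "S n \<le> 2" "\<forall>i\<in>{1..<n}. \<bar>S i\<bar> \<le> \<delta>/\<mu>"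
      using bd same by auto
    have WE': "wm_eq n \<omega> r \<mu> p \<beta> \<delta> S I"
      unfolding wm_eq_def wm_eq_axioms_def using W eq' d1 bd' by auto
    show "loc_asymp_stable n \<delta> \<omega> r \<mu> p \<beta> S I" by (rule wm_eq.stable[OF WE'])
  qed
qed

end
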